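(* Under Assumption 1, for any policy $\pi\in\Pi$ that does not use prior knowledge of the exact bias $V_{\mathrm{true}}=\|\theta_*'-\theta_*\|$, $$\sup_{(\theta_*',\theta_* )\in\Theta^\dagger\times\Theta^\dagger}R^\pi_{\theta_*',\theta_*}(T)\in\Omega(\sqrt T).$$
   Context: Model (CB-OPOD). Online features $(x_t,y_t)\in\mathcal X\times\mathcal Y\subset\mathbb R^{d_1}\times\mathbb R^{d_2}$ i.i.d.; demand $D_t=\alpha_*^\top x_t+\beta_*^\top y_tp_t+\epsilon_t$ with unknown $\theta_*=(\alpha_*,\beta_* )\in\Theta^\dagger$ and independent zero-mean $R$-subgaussian $\epsilon_t$. Offline data $\{(\hat x_n,\hat y_n,\hat p_n,\hat D_n)\}_{n=1}^N$ with deterministic $(\hat x_n,\hat y_n,\hat p_n)$ and $\hat D_n=\alpha_*'^\top\hat x_n+\beta_*'^\top\hat y_n\hat p_n+\hat\epsilon_n$ with unknown $\theta_*'\in\Theta^\dagger$. $r_\theta(p,x,y)=p(\alpha^\top x+\beta^\top yp)$, $p^*_\theta,r^*_\theta$ maximizer/maximum over $p\ge0$. $\Pi$: policies choosing $p_t$ from the offline data, past online observations and $(x_t,y_t)$. Regret $R^\pi_{\theta_*',\theta_*}(T)=\mathbb E[\sum_{t=1}^Tr^*_{\theta_*}(x_t,y_t)-r_{\theta_*}(p_t,x_t,y_t)]$. Assumption 1: (1) $\Theta^\dagger$, $\mathcal X\times\mathcal Y$ compact with norm bounds $\alpha_{\max},\beta_{\max},x_{\max},y_{\max}$; (2) $\mathbb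 E[x_1x_1^\top],\mathbb E[y_1y_1^\top]$ positive definite; (3) positive constants with $l_\alpha\le\alpha^\top x\le u_\alpha$ and $l_\beta\le-\beta^\top y\le u_\beta$ on $\Theta^\dagger\times(\mathcal X\times\mathcal Y)$. *)

theory Defs
  imports "HOL-Probability.Probability"
begin

text \<open>Parameters theta = (alpha, beta) live in 'a \<times> 'b, features x :: 'a, y :: 'b.
  An observation is (x, y, p, D).\<close>

type_synonym ('a, 'b) obs = "'a \<times> 'b \<times> real \<times> real"

definition demand :: "('a::real_inner \<times> 'b::real_inner) \<Rightarrow> 'a \<Rightarrow> 'b \<Rightarrow> real \<Rightarrow> real" where
  "demand \<theta> x y p = fst \<theta> \<bullet> x + (snd \<theta> \<bullet> y) * p"

definition revenue :: "('a::real_inner \<times> 'b::real_inner) \<Rightarrow> real \<Rightarrow> 'a \<Rightarrow> 'b \<Rightarrow> real" where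
  "revenue \<theta> p x y = p * (fst \<theta> \<bullet> x + (snd \<theta> \<bullet> y) * p)"

definition opt_revenue :: "('a::real_inner \<times> 'b::real_inner) \<Rightarrow> 'a \<Rightarrow> 'b \<Rightarrow> real" where
  "opt_revenue \<theta> x y = (SUP p\<in>{0..}. revenue \<theta> p x y)"

text \<open>Offline data set of size N: deterministic design (xh, yh, ph), noise eh, parameter theta'.\<close>
definition offline_data ::
  "('a::real_inner \<times> 'b::real_inner) \<Rightarrow> (nat \<Rightarrow> 'a) \<Rightarrow> (nat \<Rightarrow> 'b) \<Rightarrow> (nat \<Rightarrow> real) \<Rightarrow> nat
     \<Rightarrow> (nat \<Rightarrow> real) \<Rightarrow> ('a, 'b) obs list" where
  "offline_data \<theta>' xh yh ph N eh =
     map (\<lambda>n. (xh n, yh n, ph n, demand \<theta>' (xh n) (yh n) (ph n) + eh n)) [0..<N]"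

text \<open>The (already horizon- and offline-data-applied) policy
  maps the list of past online observations and the current features to a price.
  The online sample \<omega> t = ((x_t, y_t), eps_t).\<close>
fun history ::
  "(('a::real_inner, 'b::real_inner) obs list \<Rightarrow> ('a \<times> 'b) \<Rightarrow> real) \<Rightarrow> ('a \<times> 'b)
     \<Rightarrow> (nat \<Rightarrow> ('a \<times> 'b) \<times> real) \<Rightarrow> nat \<Rightarrow> ('a, 'b) obs list" where
  "history \<pi> \<theta> \<omega> 0 = []"
| "history \<pi> \<theta> \<omega> (Suc t) =
     history \<pi> \<theta> \<omega> t @
       [(let z = fst (\<omega> t); p = \<pi> (history \<pi> \<theta> \<omega> t) z
         in (fst z, snd z, p, demand \<theta> (fst z) (snd z) p + snd (\<omega> t)))]"

definition price ::
  "(('a::real_inner, 'b::real_inner) obs list \<Rightarrow> ('a \<times> 'b) \<Rightarrow> real) \<Rightarrow> ('a \<times> 'b)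
     \<Rightarrow> (nat \<Rightarrow> ('a \<times> 'b) \<times> real) \<Rightarrow> nat \<Rightarrow> real" where
  "price \<pi> \<theta> \<omega> t = \<pi> (history \<pi> \<theta> \<omega> t) (fst (\<omega> t))"

text \<open>A policy: horizon T, offline data, past online observations, current features \<mapsto> price.\<close>
type_synonym ('a, 'b) policy =
  "nat \<Rightarrow> ('a, 'b) obs list \<Rightarrow> ('a, 'b) obs list \<Rightarrow> ('a \<times> 'b) \<Rightarrow> real"

definition sample_space ::
  "('a::euclidean_space \<times> 'b::euclidean_space) measure \<Rightarrow> real measure \<Rightarrow> real measure \<Rightarrow> nat \<Rightarrow> nat
     \<Rightarrow> ((nat \<Rightarrow> ('a \<times> 'b) \<times> real) \<times> (nat \<Rightarrow> real)) measure" where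
  "sample_space F E Eh T N = (PiM {..<T} (\<lambda>_. F \<Otimes>\<^sub>M E)) \<Otimes>\<^sub>M (PiM {..<N} (\<lambda>_. Eh))"

definition policy_price ::
  "('a::euclidean_space, 'b::euclidean_space) policy \<Rightarrow> (nat \<Rightarrow> 'a) \<Rightarrow> (nat \<Rightarrow> 'b) \<Rightarrow> (nat \<Rightarrow> real)
     \<Rightarrow> nat \<Rightarrow> nat \<Rightarrow> ('a \<times> 'b) \<Rightarrow> ('a \<times> 'b)
     \<Rightarrow> (nat \<Rightarrow> ('a \<times> 'b) \<times> real) \<times> (nat \<Rightarrow> real) \<Rightarrow> nat \<Rightarrow> real" where
  "policy_price pol xh yh ph N T \<theta>' \<theta> \<omega> t =
     price (pol T (offline_data \<theta>' xh yh ph N (snd \<omega>))) \<theta> (fst \<omega>) t"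

text \<open>Expected regret R^pi_{theta', theta}(T) (integrand is nonnegative, so the
  nonnegative integral is used).\<close>
definition regret ::
  "('a::euclidean_space, 'b::euclidean_space) policy \<Rightarrow> ('a \<times> 'b) measure \<Rightarrow> real measure \<Rightarrow> real measure
     \<Rightarrow> (nat \<Rightarrow> 'a) \<Rightarrow> (nat \<Rightarrow> 'b) \<Rightarrow> (nat \<Rightarrow> real) \<Rightarrow> nat \<Rightarrow> nat
     \<Rightarrow> ('a \<times> 'b) \<Rightarrow> ('a \<times> 'b) \<Rightarrow> ennreal" where
  "regret pol F E Eh xh yh ph N T \<theta>' \<theta> =
     (\<integral>\<^sup>+ \<omega>. ennreal (\<Sum>t<T.
         opt_revenue \<theta> (fst (fst (fst \<omega> t))) (snd (fst (fst \<omega> t)))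
         - revenue \<theta> (policy_price pol xh yh ph N T \<theta>' \<theta> \<omega> t)
              (fst (fst (fst \<omega> t))) (snd (fst (fst \<omega> t))))
       \<partial>sample_space F E Eh T N)"

text \<open>Membership in Pi: prices are measurable functions of the randomness.\<close>
definition admissible_policy ::
  "('a::euclidean_space, 'b::euclidean_space) policy \<Rightarrow> ('a \<times> 'b) set \<Rightarrow> ('a \<times> 'b) measure
     \<Rightarrow> real measure \<Rightarrow> real measure \<Rightarrow> (nat \<Rightarrow> 'a) \<Rightarrow> (nat \<Rightarrow> 'b) \<Rightarrow> (nat \<Rightarrow> real) \<Rightarrow> nat \<Rightarrow> bool" where
  "admissible_policy pol \<Theta> F E Eh xh yh ph N \<longleftrightarrow>
     (\<forall>T. \<forall>\<theta>'\<in>\<Theta>. \<forall>\<theta>\<in>\<Theta>. \<forall>t<T.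
        (\<lambda>\<omega>. policy_price pol xh yh ph N T \<theta>' \<theta> \<omega> t) \<in> borel_measurable (sample_space F E Eh T N))"

definition subgaussian_zero_mean :: "real \<Rightarrow> real measure \<Rightarrow> bool" where
  "subgaussian_zero_mean R E \<longleftrightarrow>
     prob_space E \<and> sets E = sets borel \<and> integrable E (\<lambda>e. e) \<and> (\<integral>e. e \<partial>E) = 0 \<and>
     (\<forall>l. integrable E (\<lambda>e. exp (l * e)) \<and> (\<integral>e. exp (l * e) \<partial>E) \<le> exp (l\<^sup>2 * R\<^sup>2 / 2))"

text \<open>E[v v^T] as a linear operator: w \<mapsto> E[v (v^T w)].\<close>
definition second_moment :: "'v::euclidean_space measure \<Rightarrow> 'v \<Rightarrow> 'v" where
  "second_moment M w = (\<integral>v. (v \<bullet> w) *\<^sub>R v \<partial>M)"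

definition pos_def_op :: "('v::euclidean_space \<Rightarrow> 'v) \<Rightarrow> bool" where
  "pos_def_op A \<longleftrightarrow> (\<forall>w. w \<noteq> 0 \<longrightarrow> w \<bullet> A w > 0)"

text \<open>Assumption 1.  F is the law of (x_1, y_1), supported on X \<times> Y.\<close>
definition assumption1 ::
  "('a::euclidean_space \<times> 'b::euclidean_space) set \<Rightarrow> 'a set \<Rightarrow> 'b set \<Rightarrow> ('a \<times> 'b) measure \<Rightarrow> bool" where
  "assumption1 \<Theta> X Y F \<longleftrightarrow>
     compact \<Theta> \<and> \<Theta> \<noteq> {} \<and> compact X \<and> compact Y \<and>
     prob_space F \<and> sets F = sets borel \<and> emeasure F (X \<times> Y) = 1 \<and>
     pos_def_op (second_moment (distr F borel fst)) \<and>
     pos_def_op (second_moment (distr F borel snd)) \<and>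
     (\<exists>l\<^sub>\<alpha> u\<^sub>\<alpha> l\<^sub>\<beta> u\<^sub>\<beta>. 0 < l\<^sub>\<alpha> \<and> 0 < u\<^sub>\<alpha> \<and> 0 < l\<^sub>\<beta> \<and> 0 < u\<^sub>\<beta> \<and>
        (\<forall>\<theta>\<in>\<Theta>. \<forall>x\<in>X. \<forall>y\<in>Y.
           l\<^sub>\<alpha> \<le> fst \<theta> \<bullet> x \<and> fst \<theta> \<bullet> x \<le> u\<^sub>\<alpha> \<and>
           l\<^sub>\<beta> \<le> - (snd \<theta> \<bullet> y) \<and> - (snd \<theta> \<bullet> y) \<le> u\<^sub>\<beta>))"

end

theory Submission
  imports Defs
begin

abbreviation gauss :: "real measure" where "gauss \<equiv> density lborel std_normal_density"

lemma gauss_prob: "prob_space gauss"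
  by (rule prob_space_normal_density) simp

lemma sets_gauss[measurable_cong, simp]: "sets gauss = sets borel" by simp
lemma space_gauss[simp]: "space gauss = UNIV" by simp

lemma std_shift: "std_normal_density (u - c) = std_normal_density u * exp (u * c - c^2/2)"
  unfolding std_normal_density_def by (simp add: exp_add[symmetric] power2_eq_square field_simps)

lemma gauss_shift:
  assumes [measurable]: "f \<in> borel_measurable borel"
  shows "(\<integral>\<^sup>+e. f (e + c) \<partial>gauss) = (\<integral>\<^sup>+e. f e * ennreal (exp (e * c - c^2/2)) \<partial>gauss)"
proof -
  have "(\<integral>\<^sup>+e. f e * ennreal (exp (e * c - c^2/2)) \<partial>gauss)
      = (\<integral>\<^sup>+e. ennreal (std_normal_density e) * (f e * ennreal (exp (e * c - c^2/2))) \<partial>lborel)"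
    by (simp add: nn_integral_density normal_density_nonneg)
  also have "\<dots> = (\<integral>\<^sup>+e. ennreal (std_normal_density (e - c)) * f e \<partial>lborel)"
    by (intro nn_integral_cong) (simp add: std_shift ennreal_mult' normal_density_nonneg mult_ac)
  also have "\<dots> = (\<integral>\<^sup>+x. ennreal (std_normal_density (c + 1 * x - c)) * f (c + 1 * x) \<partial>lborel)"
    by (subst nn_integral_real_affine[where c=1 and t=c]) auto
  also have "\<dots> = (\<integral>\<^sup>+e. f (e + c) \<partial>gauss)"
    by (simp add: nn_integral_density normal_density_nonneg add.commute)
  finally show ?thesis ..
qed

lemma gauss_reflect:
  assumes [measurable]: "f \<in> borel_measurable borel"
  shows "(\<integral>\<^sup>+e. f (- e) \<partial>gauss) = (\<integral>\<^sup>+e. f e \<partial>gauss)"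
proof -
  have "(\<integral>\<^sup>+e. f e \<partial>gauss) = (\<integral>\<^sup>+e. ennreal (std_normal_density e) * f e \<partial>lborel)"
    by (simp add: nn_integral_density normal_density_nonneg)
  also have "\<dots> = (\<integral>\<^sup>+x. ennreal (std_normal_density (0 + (-1) * x)) * f (0 + (-1) * x) \<partial>lborel)"
    by (subst nn_integral_real_affine[where c="-1" and t=0]) auto
  also have "\<dots> = (\<integral>\<^sup>+e. f (- e) \<partial>gauss)"
    by (simp add: nn_integral_density normal_density_nonneg std_normal_density_def)
  finally show ?thesis ..
qed

lemma gauss_mgf_nn: "(\<integral>\<^sup>+e. ennreal (exp (l * e)) \<partial>gauss) = ennreal (exp (l^2/2))"
proof -
  have h: "(\<integral>\<^sup>+e. (\<lambda>_. 1::ennreal) (e + l) \<partial>gauss) = (\<integral>\<^sup>+e. 1 * ennreal (exp (e * l - l^2/2)) \<partial>gauss)"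
    by (rule gauss_shift) auto
  have one: "(\<integral>\<^sup>+e. (\<lambda>_. 1::ennreal) (e + l) \<partial>gauss) = 1"
    using prob_space.emeasure_space_1[OF gauss_prob] by simp
  have pw: "\<And>e. 1 * ennreal (exp (e * l - l^2/2)) = ennreal (exp (l * e)) * ennreal (exp (- (l^2/2)))"
  proof -
    fix e
    have "exp (e * l - l^2/2) = exp (l * e) * exp (- (l^2/2))"
      by (simp only: exp_add[symmetric]) (simp add: algebra_simps)
    then show "1 * ennreal (exp (e * l - l^2/2)) = ennreal (exp (l * e)) * ennreal (exp (- (l^2/2)))"
      by (simp add: ennreal_mult)
  qed
  have "1 = (\<integral>\<^sup>+e. ennreal (exp (l * e)) * ennreal (exp (- (l^2/2))) \<partial>gauss)"
    using h one pw by simp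
  also have "\<dots> = (\<integral>\<^sup>+e. ennreal (exp (l * e)) \<partial>gauss) * ennreal (exp (- (l^2/2)))"
    by (rule nn_integral_multc) auto
  finally have "1 * ennreal (exp (l^2/2)) = (\<integral>\<^sup>+e. ennreal (exp (l * e)) \<partial>gauss) * ennreal (exp (- (l^2/2))) * ennreal (exp (l^2/2))"
    by simp
  also have "\<dots> = (\<integral>\<^sup>+e. ennreal (exp (l * e)) \<partial>gauss) * (ennreal (exp (- (l^2/2))) * ennreal (exp (l^2/2)))"
    by (simp only: mult.assoc)
  also have "ennreal (exp (- (l^2/2))) * ennreal (exp (l^2/2)) = 1"
    by (simp add: ennreal_mult[symmetric] exp_add[symmetric])
  finally show ?thesis by simp
qed

lemma gauss_integrable_mgf: "integrable gauss (\<lambda>e. exp (l * e))"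
  by (intro integrableI_nonneg) (auto simp: gauss_mgf_nn)

lemma gauss_integral_mgf: "(\<integral>e. exp (l * e) \<partial>gauss) = exp (l^2/2)"
  using gauss_mgf_nn[of l] by (subst (asm) nn_integral_eq_integral) (auto intro: gauss_integrable_mgf)

lemma gauss_moment: "integrable gauss (\<lambda>e. e ^ k)" "(\<integral>e. e ^ k \<partial>gauss) = (\<integral>x. std_normal_density x * x ^ k \<partial>lborel)"
  by (auto simp: integrable_density integral_density normal_density_nonneg integrable_std_normal_moment)

lemma gauss_mean: "integrable gauss (\<lambda>e. e)" "(\<integral>e. e \<partial>gauss) = 0"
  using gauss_moment[of 1] integral_std_normal_moment_odd[of 0] by auto

lemma gauss_sq: "integrable gauss (\<lambda>e. e^2)" "(\<integral>e. e^2 \<partial>gauss) = 1"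
  using gauss_moment[of 2] integral_std_normal_moment_even[of 1] by auto

lemma subgauss: "subgaussian_zero_mean 1 gauss"
  unfolding subgaussian_zero_mean_def
  using gauss_prob gauss_mean gauss_integrable_mgf gauss_integral_mgf by auto

lemma RES:
  fixes M :: "'z measure" and T n :: nat
  assumes M: "prob_space M" and n: "n < T"
    and A[measurable]: "A \<in> borel_measurable (PiM {..<T} (\<lambda>_. M \<Otimes>\<^sub>M gauss))"
  shows "(\<integral>\<^sup>+w. A w \<partial>PiM {..<T} (\<lambda>_. M \<Otimes>\<^sub>M gauss))
       = (\<integral>\<^sup>+x. \<integral>\<^sup>+z. \<integral>\<^sup>+e. A (x(n := (z,e))) \<partial>gauss \<partial>M \<partial>PiM ({..<T}-{n}) (\<lambda>_. M \<Otimes>\<^sub>M gauss))"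
proof -
  interpret Mp: prob_space M by (rule M)
  interpret G: prob_space gauss by (rule gauss_prob)
  interpret Q: prob_space "M \<Otimes>\<^sub>M gauss" by (intro prob_space_pair M gauss_prob)
  interpret PS: product_sigma_finite "\<lambda>_. M \<Otimes>\<^sub>M gauss"
    by standard
  have ins: "{..<T} = insert n ({..<T}-{n})" using n by auto
  have A': "A \<in> borel_measurable (PiM (insert n ({..<T}-{n})) (\<lambda>_. M \<Otimes>\<^sub>M gauss))"
    by (subst ins[symmetric]) (rule A)
  have "(\<integral>\<^sup>+w. A w \<partial>PiM {..<T} (\<lambda>_. M \<Otimes>\<^sub>M gauss))
      = (\<integral>\<^sup>+w. A w \<partial>PiM (insert n ({..<T}-{n})) (\<lambda>_. M \<Otimes>\<^sub>M gauss))"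
    using ins by simp
  also have "\<dots> = (\<integral>\<^sup>+x. \<integral>\<^sup>+y. A (x(n := y)) \<partial>(M \<Otimes>\<^sub>M gauss) \<partial>PiM ({..<T}-{n}) (\<lambda>_. M \<Otimes>\<^sub>M gauss))"
    by (rule PS.product_nn_integral_insert[OF _ _ A']) auto
  also have "\<dots> = (\<integral>\<^sup>+x. \<integral>\<^sup>+z. \<integral>\<^sup>+e. A (x(n := (z,e))) \<partial>gauss \<partial>M \<partial>PiM ({..<T}-{n}) (\<lambda>_. M \<Otimes>\<^sub>M gauss))"
  proof (rule nn_integral_cong)
    fix x assume x: "x \<in> space (PiM ({..<T}-{n}) (\<lambda>_. M \<Otimes>\<^sub>M gauss))"
    have mf: "(\<lambda>y. A (x(n := y))) \<in> borel_measurable (M \<Otimes>\<^sub>M gauss)"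
      using measurable_comp[OF measurable_component_update[OF x, of n] A'] by (simp add: comp_def)
    show "(\<integral>\<^sup>+y. A (x(n := y)) \<partial>(M \<Otimes>\<^sub>M gauss)) = (\<integral>\<^sup>+z. \<integral>\<^sup>+e. A (x(n := (z,e))) \<partial>gauss \<partial>M)"
      using G.nn_integral_fst[OF mf] by simp
  qed
  finally show ?thesis .
qed

lemma COORD:
  fixes M :: "'z measure" and T n :: nat
  assumes M: "prob_space M" and n: "n < T"
    and A[measurable]: "A \<in> borel_measurable (PiM {..<T} (\<lambda>_. M \<Otimes>\<^sub>M gauss))"
    and B[measurable]: "B \<in> borel_measurable (PiM {..<T} (\<lambda>_. M \<Otimes>\<^sub>M gauss))"
    and eq: "\<And>x z. x \<in> space (PiM ({..<T}-{n}) (\<lambda>_. M \<Otimes>\<^sub>M gauss)) \<Longrightarrow> z \<in> space M \<Longrightarrow>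
       (\<integral>\<^sup>+e. A (x(n := (z,e))) \<partial>gauss) = (\<integral>\<^sup>+e. B (x(n := (z,e))) \<partial>gauss)"
  shows "(\<integral>\<^sup>+w. A w \<partial>PiM {..<T} (\<lambda>_. M \<Otimes>\<^sub>M gauss)) = (\<integral>\<^sup>+w. B w \<partial>PiM {..<T} (\<lambda>_. M \<Otimes>\<^sub>M gauss))"
  unfolding RES[OF M n A] RES[OF M n B]
  apply (rule nn_integral_cong)
  apply (rule nn_integral_cong)
  apply (rule eq)
  by auto

lemma comp_upd_meas:
  fixes M :: "'z measure" and T n :: nat
  assumes n: "n < T" and x: "x \<in> space (PiM ({..<T}-{n}) (\<lambda>_. M \<Otimes>\<^sub>M gauss))" and z: "z \<in> space M"
    and A: "A \<in> borel_measurable (PiM {..<T} (\<lambda>_. M \<Otimes>\<^sub>M gauss))"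
  shows "(\<lambda>e. A (x(n := (z,e)))) \<in> borel_measurable borel"
proof -
  have ins: "{..<T} = insert n ({..<T}-{n})" using n by auto
  have A': "A \<in> borel_measurable (PiM (insert n ({..<T}-{n})) (\<lambda>_. M \<Otimes>\<^sub>M gauss))"
    by (subst ins[symmetric]) (rule A)
  have "(\<lambda>e. (z, e)) \<in> measurable borel (M \<Otimes>\<^sub>M gauss)"
    using z by (auto intro!: measurable_Pair)
  from measurable_comp[OF this measurable_comp[OF measurable_component_update[OF x, of n] A']]
  show ?thesis by (simp add: comp_def)
qed

lemma SHIFT:
  fixes M :: "'z measure" and T n :: nat
  assumes M: "prob_space M" and n: "n < T"
    and d[measurable]: "d \<in> borel_measurable (PiM {..<T} (\<lambda>_. M \<Otimes>\<^sub>M gauss))"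
    and dinv: "\<And>w e. d (w(n := (fst (w n), e))) = d w"
    and G[measurable]: "G \<in> borel_measurable (PiM {..<T} (\<lambda>_. M \<Otimes>\<^sub>M gauss))"
  shows "(\<integral>\<^sup>+w. G (w(n := (fst (w n), snd (w n) + d w))) \<partial>PiM {..<T} (\<lambda>_. M \<Otimes>\<^sub>M gauss))
       = (\<integral>\<^sup>+w. G w * ennreal (exp (snd (w n) * d w - (d w)^2/2)) \<partial>PiM {..<T} (\<lambda>_. M \<Otimes>\<^sub>M gauss))"
proof (rule COORD[OF M n])
  have nT: "n \<in> {..<T}" using n by simp
  have "(\<lambda>w. w(n := (fst (w n), snd (w n) + d w))) \<in> measurable (PiM {..<T} (\<lambda>_. M \<Otimes>\<^sub>M gauss)) (PiM {..<T} (\<lambda>_. M \<Otimes>\<^sub>M gauss))"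
    by (rule measurable_fun_upd[where J="{..<T}"]) (use nT in auto)
  then show "(\<lambda>w. G (w(n := (fst (w n), snd (w n) + d w)))) \<in> borel_measurable (PiM {..<T} (\<lambda>_. M \<Otimes>\<^sub>M gauss))"
    by measurable
  show "(\<lambda>w. G w * ennreal (exp (snd (w n) * d w - (d w)^2/2))) \<in> borel_measurable (PiM {..<T} (\<lambda>_. M \<Otimes>\<^sub>M gauss))"
    using nT by measurable
next
  fix x z assume x: "x \<in> space (PiM ({..<T}-{n}) (\<lambda>_. M \<Otimes>\<^sub>M gauss))" and z: "z \<in> space M"
  define c where "c = d (x(n := (z, 0)))"
  have dc: "d (x(n := (z, e))) = c" for e
    using dinv[of "x(n := (z, e))" 0] by (simp add: c_def)
  have "(\<integral>\<^sup>+e. G ((x(n := (z,e)))(n := (fst ((x(n := (z,e))) n), snd ((x(n := (z,e))) n) + d (x(n := (z,e)))))) \<partial>gauss)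
      = (\<integral>\<^sup>+e. (\<lambda>u. G (x(n := (z,u)))) (e + c) \<partial>gauss)"
    by (simp add: dc)
  also have "\<dots> = (\<integral>\<^sup>+e. G (x(n := (z,e))) * ennreal (exp (e * c - c^2/2)) \<partial>gauss)"
    by (rule gauss_shift[OF comp_upd_meas[OF n x z G]])
  also have "\<dots> = (\<integral>\<^sup>+e. G (x(n := (z,e))) * ennreal (exp (snd ((x(n := (z,e))) n) * d (x(n := (z,e))) - (d (x(n := (z,e))))^2/2)) \<partial>gauss)"
    by (simp add: dc)
  finally show "(\<integral>\<^sup>+e. G ((x(n := (z,e)))(n := (fst ((x(n := (z,e))) n), snd ((x(n := (z,e))) n) + d (x(n := (z,e)))))) \<partial>gauss)
      = (\<integral>\<^sup>+e. G (x(n := (z,e))) * ennreal (exp (snd ((x(n := (z,e))) n) * d (x(n := (z,e))) - (d (x(n := (z,e))))^2/2)) \<partial>gauss)" .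
qed

lemma REFLECT:
  fixes M :: "'z measure" and T n :: nat
  assumes M: "prob_space M" and n: "n < T"
    and G[measurable]: "G \<in> borel_measurable (PiM {..<T} (\<lambda>_. M \<Otimes>\<^sub>M gauss))"
  shows "(\<integral>\<^sup>+w. G (w(n := (fst (w n), - snd (w n)))) \<partial>PiM {..<T} (\<lambda>_. M \<Otimes>\<^sub>M gauss))
       = (\<integral>\<^sup>+w. G w \<partial>PiM {..<T} (\<lambda>_. M \<Otimes>\<^sub>M gauss))"
proof (rule COORD[OF M n])
  have nT: "n \<in> {..<T}" using n by simp
  have "(\<lambda>w. w(n := (fst (w n), - snd (w n)))) \<in> measurable (PiM {..<T} (\<lambda>_. M \<Otimes>\<^sub>M gauss)) (PiM {..<T} (\<lambda>_. M \<Otimes>\<^sub>M gauss))"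
    by (rule measurable_fun_upd[where J="{..<T}"]) (use nT in auto)
  then show "(\<lambda>w. G (w(n := (fst (w n), - snd (w n))))) \<in> borel_measurable (PiM {..<T} (\<lambda>_. M \<Otimes>\<^sub>M gauss))"
    by measurable
next
  fix x z assume x: "x \<in> space (PiM ({..<T}-{n}) (\<lambda>_. M \<Otimes>\<^sub>M gauss))" and z: "z \<in> space M"
  show "(\<integral>\<^sup>+e. G ((x(n := (z,e)))(n := (fst ((x(n := (z,e))) n), - snd ((x(n := (z,e))) n)))) \<partial>gauss)
      = (\<integral>\<^sup>+e. G (x(n := (z,e))) \<partial>gauss)"
    using gauss_reflect[OF comp_upd_meas[OF n x z G]] by simp
qed (rule G)

lemma history_dep:
  "(\<And>s. s < t \<Longrightarrow> w s = w' s) \<Longrightarrow> history \<pi> \<theta> w t = history \<pi> \<theta> w' t"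
  by (induction t) auto

lemma price_dep:
  "(\<And>s. s < t \<Longrightarrow> w s = w' s) \<Longrightarrow> fst (w t) = fst (w' t) \<Longrightarrow> price \<pi> \<theta> w t = price \<pi> \<theta> w' t"
  unfolding price_def using history_dep[of t w w' \<pi> \<theta>] by simp

definition Dx where
  "Dx \<pi> \<theta>p \<theta>1 \<theta>2 w t = demand \<theta>2 (fst (fst (w t))) (snd (fst (w t))) (price \<pi> \<theta>p w t)
                         - demand \<theta>1 (fst (fst (w t))) (snd (fst (w t))) (price \<pi> \<theta>p w t)"

lemma Dx_dep:
  "(\<And>s. s < t \<Longrightarrow> w s = w' s) \<Longrightarrow> fst (w t) = fst (w' t) \<Longrightarrow> Dx \<pi> \<theta>p \<theta>1 \<theta>2 w t = Dx \<pi> \<theta>p \<theta>1 \<theta>2 w' t"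
  unfolding Dx_def using price_dep[of t w w' \<pi> \<theta>p] by simp

definition shiftn where
  "shiftn \<pi> \<theta>1 \<theta>2 n w = (\<lambda>s. if s < n then (fst (w s), snd (w s) + Dx \<pi> \<theta>2 \<theta>1 \<theta>2 w s) else w s)"

lemma history_shift:
  "t \<le> n \<Longrightarrow> history \<pi> \<theta>1 (shiftn \<pi> \<theta>1 \<theta>2 n w) t = history \<pi> \<theta>2 w t"
proof (induction t)
  case 0 then show ?case by simp
next
  case (Suc t)
  then have IH: "history \<pi> \<theta>1 (shiftn \<pi> \<theta>1 \<theta>2 n w) t = history \<pi> \<theta>2 w t" and tn: "t < n" by auto
  show ?case
    using IH tn by (simp add: Let_def shiftn_def Dx_def price_def)
qed

definition Psi where
  "Psi \<pi> \<theta>1 \<theta>2 n w = w(n := (fst (w n), snd (w n) + Dx \<pi> \<theta>1 \<theta>1 \<theta>2 w n))"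

lemma shift_step:
  "Psi \<pi> \<theta>1 \<theta>2 n (shiftn \<pi> \<theta>1 \<theta>2 n w) = shiftn \<pi> \<theta>1 \<theta>2 (Suc n) w"
proof -
  have pr: "price \<pi> \<theta>1 (shiftn \<pi> \<theta>1 \<theta>2 n w) n = price \<pi> \<theta>2 w n"
    using history_shift[of n n \<pi> \<theta>1 \<theta>2 w] by (simp add: price_def shiftn_def)
  show ?thesis
    unfolding Psi_def by (rule ext) (auto simp: shiftn_def Dx_def pr[unfolded shiftn_def])
qed

definition Lik where
  "Lik \<pi> \<theta>1 \<theta>2 n w = exp (\<Sum>t<n. snd (w t) * Dx \<pi> \<theta>1 \<theta>1 \<theta>2 w t - (Dx \<pi> \<theta>1 \<theta>1 \<theta>2 w t)^2/2)"

lemma Lik_Psi: "Lik \<pi> \<theta>1 \<theta>2 n (Psi \<pi> \<theta>1 \<theta>2 n w) = Lik \<pi> \<theta>1 \<theta>2 n w"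
proof -
  have "Dx \<pi> \<theta>1 \<theta>1 \<theta>2 (Psi \<pi> \<theta>1 \<theta>2 n w) t = Dx \<pi> \<theta>1 \<theta>1 \<theta>2 w t" if "t < n" for t
    by (rule Dx_dep) (use that in \<open>auto simp: Psi_def\<close>)
  moreover have "Psi \<pi> \<theta>1 \<theta>2 n w t = w t" if "t < n" for t
    using that by (simp add: Psi_def)
  ultimately show ?thesis unfolding Lik_def by (intro arg_cong[where f=exp] sum.cong) auto
qed

lemma Dx_inv: "Dx \<pi> \<theta>p \<theta>1 \<theta>2 (w(n := (fst (w n), e))) n = Dx \<pi> \<theta>p \<theta>1 \<theta>2 w n"
  by (rule Dx_dep) auto

lemma meas_demand[measurable]:
  fixes \<theta> :: "'a::euclidean_space \<times> 'b::euclidean_space"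
  assumes [measurable]: "f \<in> borel_measurable N" "g \<in> borel_measurable N" "h \<in> borel_measurable N"
  shows "(\<lambda>x. demand \<theta> (f x) (g x) (h x)) \<in> borel_measurable N"
  unfolding demand_def by measurable

lemma CM:
  fixes M :: "('a::euclidean_space \<times> 'b::euclidean_space) measure" and T n :: nat
    and \<pi> :: "('a, 'b) obs list \<Rightarrow> ('a \<times> 'b) \<Rightarrow> real"
  assumes M: "prob_space M" and sM: "sets M = sets borel"
    and pm: "\<And>t. t < T \<Longrightarrow> (\<lambda>w. price \<pi> \<theta>1 w t) \<in> borel_measurable (PiM {..<T} (\<lambda>_. M \<Otimes>\<^sub>M gauss))"
    and n: "n \<le> T"
    and G: "G \<in> borel_measurable (PiM {..<T} (\<lambda>_. M \<Otimes>\<^sub>M gauss))"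
  shows "(\<integral>\<^sup>+w. G (shiftn \<pi> \<theta>1 \<theta>2 n w) \<partial>PiM {..<T} (\<lambda>_. M \<Otimes>\<^sub>M gauss))
       = (\<integral>\<^sup>+w. G w * ennreal (Lik \<pi> \<theta>1 \<theta>2 n w) \<partial>PiM {..<T} (\<lambda>_. M \<Otimes>\<^sub>M gauss))"
  using n G
proof (induction n arbitrary: G)
  case 0
  have "shiftn \<pi> \<theta>1 \<theta>2 0 w = w" for w by (simp add: shiftn_def)
  then show ?case by (simp add: Lik_def)
next
  case (Suc n)
  let ?P = "PiM {..<T} (\<lambda>_. M \<Otimes>\<^sub>M gauss)"
  have nT: "n < T" and nT': "n \<in> {..<T}" using Suc by auto
  have Dm[measurable]: "(\<lambda>w. Dx \<pi> \<theta>1 \<theta>1 \<theta>2 w t) \<in> borel_measurable ?P" if "t < T" for t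
  proof -
    have [measurable]: "(\<lambda>w. price \<pi> \<theta>1 w t) \<in> borel_measurable ?P" using pm that by auto
    have [measurable]: "(\<lambda>w. w t) \<in> measurable ?P (M \<Otimes>\<^sub>M gauss)" by (rule measurable_component_singleton) (use that in simp)
    have [measurable]: "fst \<in> borel_measurable M" "snd \<in> borel_measurable M"
      by (simp_all add: measurable_cong_sets[OF sM refl] borel_prod[symmetric])
    show ?thesis unfolding Dx_def by measurable
  qed
  have Sm[measurable]: "(\<lambda>w. \<Sum>t<n. snd (w t) * Dx \<pi> \<theta>1 \<theta>1 \<theta>2 w t - (Dx \<pi> \<theta>1 \<theta>1 \<theta>2 w t)\<^sup>2 / 2) \<in> borel_measurable ?P"
  proof (rule borel_measurable_sum)
    fix t assume "t \<in> {..<n}"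
    then have t: "t < T" using nT by auto
    have d: "(\<lambda>w. Dx \<pi> \<theta>1 \<theta>1 \<theta>2 w t) \<in> borel_measurable ?P" by (rule Dm[OF t])
    have "(\<lambda>w. w t) \<in> measurable ?P (M \<Otimes>\<^sub>M gauss)" by (rule measurable_component_singleton) (use t in simp)
    from measurable_compose[OF this measurable_snd]
    have c: "(\<lambda>w. snd (w t)) \<in> borel_measurable ?P"
      by (simp add: measurable_cong_sets[OF refl sets_gauss])
    show "(\<lambda>w. snd (w t) * Dx \<pi> \<theta>1 \<theta>1 \<theta>2 w t - (Dx \<pi> \<theta>1 \<theta>1 \<theta>2 w t)\<^sup>2 / 2) \<in> borel_measurable ?P"
      by (intro borel_measurable_diff borel_measurable_times borel_measurable_divide borel_measurable_power c d borel_measurable_const)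
  qed
  have Lm[measurable]: "(\<lambda>w. Lik \<pi> \<theta>1 \<theta>2 n w) \<in> borel_measurable ?P"
    unfolding Lik_def by measurable
  have Psim: "Psi \<pi> \<theta>1 \<theta>2 n \<in> measurable ?P ?P"
    unfolding Psi_def[abs_def]
    by (rule measurable_fun_upd[where J="{..<T}"]) (use nT' nT in auto)
  have Gm[measurable]: "G \<in> borel_measurable ?P" by (rule Suc.prems)
  have "(\<integral>\<^sup>+w. G (shiftn \<pi> \<theta>1 \<theta>2 (Suc n) w) \<partial>?P) = (\<integral>\<^sup>+w. (\<lambda>w. G (Psi \<pi> \<theta>1 \<theta>2 n w)) (shiftn \<pi> \<theta>1 \<theta>2 n w) \<partial>?P)"
    by (simp add: shift_step)
  also have "\<dots> = (\<integral>\<^sup>+w. G (Psi \<pi> \<theta>1 \<theta>2 n w) * ennreal (Lik \<pi> \<theta>1 \<theta>2 n w) \<partial>?P)"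
    by (rule Suc.IH) (use Suc.prems measurable_comp[OF Psim Gm] in \<open>auto simp: comp_def\<close>)
  also have "\<dots> = (\<integral>\<^sup>+w. (\<lambda>w. G w * ennreal (Lik \<pi> \<theta>1 \<theta>2 n w)) (w(n := (fst (w n), snd (w n) + Dx \<pi> \<theta>1 \<theta>1 \<theta>2 w n))) \<partial>?P)"
    using Lik_Psi[of \<pi> \<theta>1 \<theta>2 n] by (simp add: Psi_def)
  also have "\<dots> = (\<integral>\<^sup>+w. G w * ennreal (Lik \<pi> \<theta>1 \<theta>2 n w) * ennreal (exp (snd (w n) * Dx \<pi> \<theta>1 \<theta>1 \<theta>2 w n - (Dx \<pi> \<theta>1 \<theta>1 \<theta>2 w n)^2/2)) \<partial>?P)"
    by (rule SHIFT[OF M nT Dm[OF nT] Dx_inv]) measurable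
  also have "\<dots> = (\<integral>\<^sup>+w. G w * ennreal (Lik \<pi> \<theta>1 \<theta>2 (Suc n) w) \<partial>?P)"
    by (intro nn_integral_cong) (simp add: Lik_def exp_add ennreal_mult mult.assoc)
  finally show ?case .
qed

definition sumB :: "'a::euclidean_space" where "sumB = (\<Sum>b\<in>Basis. b)"

lemma sumB_inner: "b \<in> Basis \<Longrightarrow> sumB \<bullet> (b::'a::euclidean_space) = 1"
  unfolding sumB_def by (simp add: inner_sum_left inner_Basis)

definition th :: "real \<Rightarrow> ('a::euclidean_space \<times> 'b::euclidean_space)" where
  "th b = ((1 + b) *\<^sub>R sumB, (- b) *\<^sub>R sumB)"

lemma demand_th: "x \<in> Basis \<Longrightarrow> y \<in> Basis \<Longrightarrow> demand (th b) x y p = (1 + b) - b * p"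
  by (simp add: demand_def th_def sumB_inner)

lemma revenue_th: "x \<in> Basis \<Longrightarrow> y \<in> Basis \<Longrightarrow> revenue (th b) p x y = p * ((1 + b) - b * p)"
  by (simp add: revenue_def th_def sumB_inner)

lemma opt_th:
  assumes b: "b > 0" and x: "x \<in> Basis" and y: "y \<in> Basis"
  shows "opt_revenue (th b) x y = (1 + b)^2 / (4 * b)"
  unfolding opt_revenue_def
proof (rule cSup_eq_maximum)
  show "(1 + b)^2 / (4 * b) \<in> (\<lambda>p. revenue (th b) p x y) ` {0..}"
  proof
    show "(1 + b)^2 / (4 * b) = revenue (th b) ((1 + b) / (2 * b)) x y"
      using b by (simp add: revenue_th[OF x y] field_simps power2_eq_square)
    show "(1 + b) / (2 * b) \<in> {0..}" using b by simp
  qed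
next
  fix r assume "r \<in> (\<lambda>p. revenue (th b) p x y) ` {0..}"
  then obtain p where r: "r = p * ((1 + b) - b * p)" using revenue_th[OF x y] by auto
  have "0 \<le> (2 * b * p - (1 + b))^2 / (4 * b)" using b by simp
  also have "(2 * b * p - (1 + b))^2 / (4 * b) = (1 + b)^2 / (4 * b) - r"
    using b unfolding r by (simp add: field_simps power2_eq_square)
  finally show "r \<le> (1 + b)^2 / (4 * b)" by simp
qed

lemma regret_th:
  assumes b: "b > 0" and x: "x \<in> Basis" and y: "y \<in> Basis"
  shows "opt_revenue (th b) x y - revenue (th b) p x y = b * (p - (1 + b) / (2 * b))^2"
  using b by (simp add: opt_th[OF b x y] revenue_th[OF x y] field_simps power2_eq_square)

definition Bset :: "('a::euclidean_space \<times> 'b::euclidean_space) set" where "Bset = Basis \<times> Basis"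

lemma Bset_fin: "finite Bset" and Bset_ne: "Bset \<noteq> {}"
  by (auto simp: Bset_def)

definition Fm :: "('a::euclidean_space \<times> 'b::euclidean_space) measure" where
  "Fm = distr (measure_pmf (pmf_of_set Bset)) borel id"

lemma Fm_prob: "prob_space Fm"
  unfolding Fm_def by (rule prob_space.prob_space_distr) (auto simp: measure_pmf.prob_space_axioms)

lemma sets_Fm[simp, measurable_cong]: "sets Fm = sets borel"
  by (simp add: Fm_def)

lemma Bset_closed: "Bset \<in> sets borel"
  using Bset_fin by (intro borel_closed finite_imp_closed)

lemma emeasure_Fm_Bset: "emeasure Fm Bset = 1"
  unfolding Fm_def using Bset_closed
  by (subst emeasure_distr) (auto simp: emeasure_pmf_of_set_space[OF Bset_ne Bset_fin])

lemma emeasure_Fm_compl: "emeasure Fm (UNIV - Bset) = 0"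
  unfolding Fm_def using Bset_closed
  by (subst emeasure_distr) (auto simp: emeasure_pmf_of_set[OF Bset_ne Bset_fin])

lemma sm_formula:
  fixes f :: "('a::euclidean_space \<times> 'b::euclidean_space) \<Rightarrow> 'c::euclidean_space"
  assumes f[measurable]: "f \<in> borel_measurable borel"
  shows "second_moment (distr Fm borel f) w = (\<Sum>z\<in>Bset. pmf (pmf_of_set Bset) z *\<^sub>R ((f z \<bullet> w) *\<^sub>R f z))"
proof -
  have g[measurable]: "(\<lambda>v::'c. (v \<bullet> w) *\<^sub>R v) \<in> borel_measurable borel" by measurable
  have "second_moment (distr Fm borel f) w = (\<integral>z. (f z \<bullet> w) *\<^sub>R f z \<partial>Fm)"
    unfolding second_moment_def by (subst integral_distr) (auto simp: measurable_cong_sets[OF sets_Fm refl])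
  also have "\<dots> = (\<integral>z. (f z \<bullet> w) *\<^sub>R f z \<partial>measure_pmf (pmf_of_set Bset))"
    unfolding Fm_def by (subst integral_distr) auto
  also have "\<dots> = (\<Sum>z\<in>Bset. pmf (pmf_of_set Bset) z *\<^sub>R ((f z \<bullet> w) *\<^sub>R f z))"
    by (rule integral_measure_pmf[OF Bset_fin]) (use Bset_fin Bset_ne in \<open>auto simp: set_pmf_of_set[OF Bset_ne Bset_fin]\<close>)
  finally show ?thesis .
qed

lemma fst_borel: "(fst :: 'a::euclidean_space \<times> 'b::euclidean_space \<Rightarrow> 'a) \<in> borel_measurable borel"
  by (simp add: borel_prod[symmetric])
lemma snd_borel: "(snd :: 'a::euclidean_space \<times> 'b::euclidean_space \<Rightarrow> 'b) \<in> borel_measurable borel"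
  by (simp add: borel_prod[symmetric])

lemma exists_basis_nz:
  assumes "(w::'a::euclidean_space) \<noteq> 0" shows "\<exists>b\<in>Basis. b \<bullet> w \<noteq> 0"
  using assms euclidean_eqI[of w 0] by (auto simp: inner_commute)

lemma second_moment_pos:
  "(w::'a::euclidean_space) \<noteq> 0 \<Longrightarrow> w \<bullet> second_moment (distr (Fm::('a \<times> 'b::euclidean_space) measure) borel fst) w > 0"
  "(v::'b) \<noteq> 0 \<Longrightarrow> v \<bullet> second_moment (distr (Fm::('a \<times> 'b) measure) borel snd) v > 0"
proof -
  have pm: "pmf (pmf_of_set Bset) z = (if z \<in> Bset then 1 / card (Bset::('a \<times> 'b) set) else 0)" for z :: "'a \<times> 'b"
    by (simp add: pmf_of_set[OF Bset_ne Bset_fin])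
  have cpos: "card (Bset::('a \<times> 'b) set) > 0" using Bset_fin Bset_ne by (simp add: card_gt_0_iff)
  assume w: "w \<noteq> 0"
  obtain b where b: "b \<in> Basis" "b \<bullet> w \<noteq> 0" using exists_basis_nz[OF w] by blast
  obtain c :: 'b where c: "c \<in> Basis" using nonempty_Basis by blast
  have "w \<bullet> second_moment (distr (Fm::('a \<times> 'b) measure) borel fst) w
      = (\<Sum>z\<in>(Bset::('a \<times> 'b) set). pmf (pmf_of_set Bset) z * (fst z \<bullet> w)^2)"
    by (simp add: sm_formula[OF fst_borel] inner_sum_right power2_eq_square inner_commute mult.assoc)
  also have "\<dots> > 0"
    by (rule sum_pos2[where i="(b, c)"]) (use Bset_fin b c cpos in \<open>auto simp: pm Bset_def\<close>)
  finally show "w \<bullet> second_moment (distr (Fm::('a \<times> 'b) measure) borel fst) w > 0" .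
next
  have pm: "pmf (pmf_of_set Bset) z = (if z \<in> Bset then 1 / card (Bset::('a \<times> 'b) set) else 0)" for z :: "'a \<times> 'b"
    by (simp add: pmf_of_set[OF Bset_ne Bset_fin])
  have cpos: "card (Bset::('a \<times> 'b) set) > 0" using Bset_fin Bset_ne by (simp add: card_gt_0_iff)
  assume w: "v \<noteq> 0"
  obtain b where b: "b \<in> Basis" "b \<bullet> v \<noteq> 0" using exists_basis_nz[OF w] by blast
  obtain c :: 'a where c: "c \<in> Basis" using nonempty_Basis by blast
  have "v \<bullet> second_moment (distr (Fm::('a \<times> 'b) measure) borel snd) v
      = (\<Sum>z\<in>(Bset::('a \<times> 'b) set). pmf (pmf_of_set Bset) z * (snd z \<bullet> v)^2)"
    by (simp add: sm_formula[OF snd_borel] inner_sum_right power2_eq_square inner_commute mult.assoc)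
  also have "\<dots> > 0"
    by (rule sum_pos2[where i="(c, b)"]) (use Bset_fin b c cpos in \<open>auto simp: pm Bset_def\<close>)
  finally show "v \<bullet> second_moment (distr (Fm::('a \<times> 'b) measure) borel snd) v > 0" .
qed

lemma assm1:
  "assumption1 (th ` {1..2} :: ('a::euclidean_space \<times> 'b::euclidean_space) set) Basis Basis Fm"
proof -
  have cont: "continuous_on {1..2} (th :: real \<Rightarrow> 'a \<times> 'b)"
    unfolding th_def by (intro continuous_intros)
  have bounds: "\<forall>\<theta>\<in>(th ` {1..2} :: ('a \<times> 'b) set). \<forall>x\<in>Basis. \<forall>y\<in>Basis.
           2 \<le> fst \<theta> \<bullet> x \<and> fst \<theta> \<bullet> x \<le> 3 \<and> 1 \<le> - (snd \<theta> \<bullet> y) \<and> - (snd \<theta> \<bullet> y) \<le> 2"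
    by (auto simp: th_def sumB_inner)
  have ex: "\<exists>la ua lb ub. 0 < la \<and> 0 < ua \<and> 0 < lb \<and> 0 < (ub::real) \<and>
     (\<forall>\<theta>\<in>(th ` {1..2} :: ('a \<times> 'b) set). \<forall>x\<in>Basis. \<forall>y\<in>Basis.
           la \<le> fst \<theta> \<bullet> x \<and> fst \<theta> \<bullet> x \<le> ua \<and> lb \<le> - (snd \<theta> \<bullet> y) \<and> - (snd \<theta> \<bullet> y) \<le> ub)"
    by (rule exI[of _ 2], rule exI[of _ 3], rule exI[of _ 1], rule exI[of _ 2]) (use bounds in auto)
  show ?thesis
    unfolding assumption1_def
    using compact_continuous_image[OF cont compact_Icc] Fm_prob emeasure_Fm_Bset
      second_moment_pos ex
    by (auto simp: pos_def_op_def finite_imp_compact Bset_def)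
qed

context
  fixes \<pi> :: "('a::euclidean_space, 'b::euclidean_space) obs list \<Rightarrow> ('a \<times> 'b) \<Rightarrow> real"
    and T :: nat and \<delta> :: real
  assumes pm: "\<And>t. t < T \<Longrightarrow> (\<lambda>w. price \<pi> (th 1) w t) \<in> borel_measurable (PiM {..<T} (\<lambda>_. (Fm::('a \<times> 'b) measure) \<Otimes>\<^sub>M gauss))"
    and \<delta>: "0 < \<delta>" "\<delta> \<le> 1"
begin

abbreviation "PP \<equiv> PiM {..<T} (\<lambda>_. (Fm::('a \<times> 'b) measure) \<Otimes>\<^sub>M gauss)"

lemma PP_prob: "prob_space PP"
proof -
  have Q: "prob_space ((Fm::('a \<times> 'b) measure) \<Otimes>\<^sub>M gauss)" by (intro prob_space_pair Fm_prob gauss_prob)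
  show ?thesis by (intro prob_space_PiM Q)
qed

lemma comp_m: "t < T \<Longrightarrow> (\<lambda>w. w t) \<in> measurable PP ((Fm::('a \<times> 'b) measure) \<Otimes>\<^sub>M gauss)"
  by (rule measurable_component_singleton) simp

lemma fst_m: "t < T \<Longrightarrow> (\<lambda>w. fst (w t)) \<in> borel_measurable PP"
  using measurable_compose[OF comp_m measurable_fst]
  by (simp add: measurable_cong_sets[OF refl sets_Fm])

lemma fst1_m: "t < T \<Longrightarrow> (\<lambda>w. fst (fst (w t))) \<in> borel_measurable PP"
  using measurable_compose[OF fst_m fst_borel] by simp

lemma fst2_m: "t < T \<Longrightarrow> (\<lambda>w. snd (fst (w t))) \<in> borel_measurable PP"
  using measurable_compose[OF fst_m snd_borel] by simp

lemma snd_m: "t < T \<Longrightarrow> (\<lambda>w. snd (w t)) \<in> borel_measurable PP"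
  using measurable_compose[OF comp_m measurable_snd]
  by (simp add: measurable_cong_sets[OF refl sets_gauss])

abbreviation "Dt w t \<equiv> Dx \<pi> (th 1) (th 1) (th (1 + \<delta>)) w t"

lemma Dt_m: "t < T \<Longrightarrow> (\<lambda>w. Dt w t) \<in> borel_measurable PP"
proof -
  assume t: "t < T"
  have d: "(\<lambda>w. demand \<theta> (fst (fst (w t))) (snd (fst (w t))) (price \<pi> (th 1) w t)) \<in> borel_measurable PP"
    for \<theta> :: "'a \<times> 'b"
    by (rule meas_demand[OF fst1_m[OF t] fst2_m[OF t] pm[OF t]])
  show ?thesis unfolding Dx_def by (rule borel_measurable_diff[OF d d])
qed

definition allB :: "(nat \<Rightarrow> ('a \<times> 'b) \<times> real) \<Rightarrow> bool" where
  "allB w \<longleftrightarrow> (\<forall>t\<in>{..<T}. fst (w t) \<in> Bset)"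

definition Aset where "Aset = {w \<in> space PP. allB w}"

lemma Aset_sets: "Aset \<in> sets PP"
  unfolding Aset_def allB_def
proof (rule sets.sets_Collect_finite_All)
  fix t assume "t \<in> {..<T}"
  then have t: "t < T" by simp
  have "(\<lambda>w. fst (w t)) -` Bset \<inter> space PP \<in> sets PP"
    by (rule measurable_sets[OF fst_m[OF t] Bset_closed])
  moreover have "{w \<in> space PP. fst (w t) \<in> Bset} = (\<lambda>w. fst (w t)) -` Bset \<inter> space PP" by blast
  ultimately show "{w \<in> space PP. fst (w t) \<in> Bset} \<in> sets PP" by simp
next
  show "finite {..<T}" by simp
qed

lemma AE_allB: "AE w in PP. allB w"
proof -
  have Q: "prob_space ((Fm::('a \<times> 'b) measure) \<Otimes>\<^sub>M gauss)" by (intro prob_space_pair Fm_prob gauss_prob)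
  have ps: "product_prob_space (\<lambda>_. (Fm::('a \<times> 'b) measure) \<Otimes>\<^sub>M gauss)"
    unfolding product_prob_space_def product_prob_space_axioms_def product_sigma_finite_def
    using Q prob_space_imp_sigma_finite by blast
  interpret PPS: product_prob_space "\<lambda>_. (Fm::('a \<times> 'b) measure) \<Otimes>\<^sub>M gauss" "{..<T}"
    by (rule ps)
  interpret G: prob_space gauss by (rule gauss_prob)
  have "AE w in PP. fst (w t) \<in> Bset" if t: "t < T" for t
  proof (rule AE_I')
    have cs: "(UNIV - Bset) \<times> UNIV \<in> sets ((Fm::('a \<times> 'b) measure) \<Otimes>\<^sub>M gauss)"
      using sets.compl_sets[OF Bset_closed] by (intro pair_measureI) auto
    have "emeasure ((Fm::('a \<times> 'b) measure) \<Otimes>\<^sub>M gauss) ((UNIV - Bset) \<times> UNIV) = 0"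
      using sets.compl_sets[OF Bset_closed]
      by (subst G.emeasure_pair_measure_Times) (auto simp: emeasure_Fm_compl)
    then show "{w \<in> space PP. w t \<in> (UNIV - Bset) \<times> UNIV} \<in> null_sets PP"
    proof -
      have "{w \<in> space PP. w t \<in> (UNIV - Bset) \<times> UNIV} \<in> sets PP"
      proof (rule sets_Collect_single')
        show "t \<in> {..<T}" using t by simp
        have "{x \<in> space ((Fm::('a \<times> 'b) measure) \<Otimes>\<^sub>M gauss). x \<in> (UNIV - Bset) \<times> UNIV} = (UNIV - Bset) \<times> UNIV"
          by (auto simp: space_pair_measure Fm_def)
        then show "{x \<in> space ((Fm::('a \<times> 'b) measure) \<Otimes>\<^sub>M gauss). x \<in> (UNIV - Bset) \<times> UNIV} \<in> sets ((Fm::('a \<times> 'b) measure) \<Otimes>\<^sub>M gauss)"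
          using cs by simp
      qed
      moreover have "emeasure PP {w \<in> space PP. w t \<in> (UNIV - Bset) \<times> UNIV} = 0"
        using PPS.emeasure_PiM_Collect_single[of t "(UNIV - Bset) \<times> UNIV"] t cs
          \<open>emeasure ((Fm::('a \<times> 'b) measure) \<Otimes>\<^sub>M gauss) ((UNIV - Bset) \<times> UNIV) = 0\<close> by simp
      ultimately show ?thesis by (simp add: null_sets_def)
    qed
    show "{w \<in> space PP. \<not> fst (w t) \<in> Bset} \<subseteq> {w \<in> space PP. w t \<in> (UNIV - Bset) \<times> UNIV}"
      by (auto simp: mem_Times_iff)
  qed
  then have "AE w in PP. \<forall>t\<in>{..<T}. fst (w t) \<in> Bset"
    by (intro eventually_ball_finite) auto
  then show ?thesis unfolding allB_def .
qed

lemma Dt_B: "fst (w t) \<in> Bset \<Longrightarrow> Dt w t = \<delta> * (1 - price \<pi> (th 1) w t)"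
  by (auto simp: Dx_def demand_th Bset_def mem_Times_iff algebra_simps)

abbreviation "LL w \<equiv> Lik \<pi> (th 1) (th (1 + \<delta>)) T w"

lemma LL_m: "(\<lambda>w. LL w) \<in> borel_measurable PP"
proof -
  have "(\<lambda>w. \<Sum>t<T. snd (w t) * Dt w t - (Dt w t)\<^sup>2 / 2) \<in> borel_measurable PP"
    by (intro borel_measurable_sum borel_measurable_diff borel_measurable_times borel_measurable_divide
        borel_measurable_power snd_m Dt_m borel_measurable_const) auto
  then show ?thesis unfolding Lik_def by measurable
qed

lemma int_LL: "(\<integral>\<^sup>+w. ennreal (LL w) \<partial>PP) = 1"
proof -
  interpret prob_space PP by (rule PP_prob)
  have "(\<integral>\<^sup>+w. (\<lambda>_. 1::ennreal) (shiftn \<pi> (th 1) (th (1 + \<delta>)) T w) \<partial>PP) = (\<integral>\<^sup>+w. 1 * ennreal (LL w) \<partial>PP)"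
    by (rule CM[OF Fm_prob sets_Fm pm]) auto
  then show ?thesis by (simp add: emeasure_space_1)
qed

lemma if_m:
  fixes f :: "_ \<Rightarrow> ennreal"
  assumes f: "f \<in> borel_measurable PP"
  shows "(\<lambda>w. if allB w then f w else 0) \<in> borel_measurable PP"
proof -
  have "{w. allB w} \<inter> space PP = Aset" by (auto simp: Aset_def)
  then have "(\<lambda>w. if w \<in> {w. allB w} then f w else 0) \<in> borel_measurable PP"
    using Aset_sets by (intro measurable_If_set f borel_measurable_const) auto
  then show ?thesis by simp
qed

lemma ennr_m:
  fixes f :: "_ \<Rightarrow> real"
  assumes f: "f \<in> borel_measurable PP"
  shows "(\<lambda>w. ennreal (f w)) \<in> borel_measurable PP"
  using measurable_compose[OF f measurable_ennreal] by simp

definition qd where "qd = (1 + (1 + \<delta>)) / (2 * (1 + \<delta>))"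

definition G1 where "G1 w = (if allB w then ennreal (\<Sum>t<T. (price \<pi> (th 1) w t - 1)^2) else 0)"
definition Gd where "Gd w = (if allB w then ennreal (\<Sum>t<T. (1 + \<delta>) * (price \<pi> (th 1) w t - qd)^2) else 0)"

lemma G1_m: "G1 \<in> borel_measurable PP"
  unfolding G1_def[abs_def]
  by (intro if_m ennr_m borel_measurable_sum borel_measurable_power borel_measurable_diff borel_measurable_const pm) auto

lemma Gd_m: "Gd \<in> borel_measurable PP"
  unfolding Gd_def[abs_def]
  by (intro if_m ennr_m borel_measurable_sum borel_measurable_times borel_measurable_power borel_measurable_diff borel_measurable_const pm) auto

lemma shiftn_fst: "fst (shiftn \<pi>' \<theta>1 \<theta>2 n w s) = fst (w s)"
  by (simp add: shiftn_def)

lemma shiftn_space: "w \<in> space PP \<Longrightarrow> shiftn \<pi>' \<theta>1 \<theta>2 T w \<in> space PP"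
  by (auto simp: space_PiM PiE_iff shiftn_def extensional_def space_pair_measure Fm_def)

lemma price_shiftn: "t < T \<Longrightarrow> price \<pi> (th 1) (shiftn \<pi> (th 1) (th (1 + \<delta>)) T w) t = price \<pi> (th (1 + \<delta>)) w t"
  unfolding price_def using history_shift[of t T \<pi> "th 1" "th (1 + \<delta>)" w] by (simp add: shiftn_fst)

lemma allB_shiftn: "allB (shiftn \<pi>' \<theta>1 \<theta>2 n w) = allB w"
  by (simp add: allB_def shiftn_fst)

lemma Id_eq:
  "(\<integral>\<^sup>+w. (if allB w then ennreal (\<Sum>t<T. (1 + \<delta>) * (price \<pi> (th (1 + \<delta>)) w t - qd)^2) else 0) \<partial>PP)
   = (\<integral>\<^sup>+w. Gd w * ennreal (LL w) \<partial>PP)"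
proof -
  have "(\<integral>\<^sup>+w. Gd (shiftn \<pi> (th 1) (th (1 + \<delta>)) T w) \<partial>PP) = (\<integral>\<^sup>+w. Gd w * ennreal (LL w) \<partial>PP)"
    by (rule CM[OF Fm_prob sets_Fm pm _ Gd_m]) auto
  moreover have "Gd (shiftn \<pi> (th 1) (th (1 + \<delta>)) T w)
      = (if allB w then ennreal (\<Sum>t<T. (1 + \<delta>) * (price \<pi> (th (1 + \<delta>)) w t - qd)^2) else 0)" for w
    unfolding Gd_def allB_shiftn by (simp add: price_shiftn)
  ultimately show ?thesis by simp
qed

lemma pointwise_regret:
  fixes p :: real
  shows "(p - 1)^2 + (1 + \<delta>) * (p - qd)^2 \<ge> \<delta>^2 / 32"
proof -
  have q1: "1 - qd = \<delta> / (2 * (1 + \<delta>))" using \<delta> by (simp add: qd_def field_simps)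
  have "\<delta> / (2 * (1 + \<delta>)) \<ge> \<delta> / 4" using \<delta> by (simp add: field_simps)
  then have h1: "(1 - qd)^2 \<ge> (\<delta> / 4)^2" using q1 \<delta> by (intro power_mono) auto
  have h2: "(p - 1)^2 + (p - qd)^2 - (1 - qd)^2 / 2 = 2 * (p - (1 + qd) / 2)^2"
    by (simp add: power2_eq_square field_simps)
  have h3: "(1 + \<delta>) * (p - qd)^2 \<ge> (p - qd)^2" using \<delta> by (simp add: mult_le_cancel_right1)
  have "(p - 1)^2 + (p - qd)^2 \<ge> (1 - qd)^2 / 2" using h2 by (smt (verit) zero_le_power2)
  then show ?thesis using h1 h3 by (simp add: power_divide)
qed

lemma sum_regret:
  "(\<Sum>t<T. (price \<pi> (th 1) w t - 1)^2) + (\<Sum>t<T. (1 + \<delta>) * (price \<pi> (th 1) w t - qd)^2) \<ge> real T * \<delta>^2 / 32"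
proof -
  have "real T * \<delta>^2 / 32 = (\<Sum>t<T. \<delta>^2 / 32)" by simp
  also have "\<dots> \<le> (\<Sum>t<T. (price \<pi> (th 1) w t - 1)^2 + (1 + \<delta>) * (price \<pi> (th 1) w t - qd)^2)"
    by (intro sum_mono pointwise_regret)
  finally show ?thesis by (simp add: sum.distrib)
qed

lemma eps_m: "t < T \<Longrightarrow> (\<lambda>w. snd (w t)) \<in> borel_measurable PP" by (rule snd_m)

lemma eps_sq_nn: assumes t: "t < T" shows "(\<integral>\<^sup>+w. ennreal ((snd (w t))^2) \<partial>PP) = 1"
proof -
  have Am: "(\<lambda>w. ennreal ((snd (w t))^2)) \<in> borel_measurable PP"
    by (intro ennr_m borel_measurable_power snd_m t)
  have g: "(\<integral>\<^sup>+e. ennreal (e^2) \<partial>gauss) = 1"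
    using gauss_sq by (subst nn_integral_eq_integral) auto
  interpret F: prob_space "Fm::('a \<times> 'b) measure" by (rule Fm_prob)
  have Q: "prob_space ((Fm::('a \<times> 'b) measure) \<Otimes>\<^sub>M gauss)" by (intro prob_space_pair Fm_prob gauss_prob)
  interpret P': prob_space "PiM ({..<T}-{t}) (\<lambda>_. (Fm::('a \<times> 'b) measure) \<Otimes>\<^sub>M gauss)"
    by (intro prob_space_PiM Q)
  show ?thesis
    unfolding RES[OF Fm_prob t Am] by (simp add: g F.emeasure_space_1 P'.emeasure_space_1)
qed

lemma eps_sq_int: "t < T \<Longrightarrow> integrable PP (\<lambda>w. (snd (w t))^2)"
  by (intro integrableI_nonneg borel_measurable_power snd_m) (auto simp: eps_sq_nn)

context
  assumes hyp: "(\<integral>\<^sup>+w. G1 w \<partial>PP) < ennreal (1 / \<delta>^2)"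
begin

lemma Sq_m: "(\<lambda>w. \<Sum>t<T. (Dt w t)^2) \<in> borel_measurable PP"
  by (intro borel_measurable_sum borel_measurable_power Dt_m) auto

lemma Sq_nn: "(\<integral>\<^sup>+w. ennreal (\<Sum>t<T. (Dt w t)^2) \<partial>PP) < 1"
proof -
  have ae: "AE w in PP. ennreal (\<Sum>t<T. (Dt w t)^2) = ennreal (\<delta>^2) * G1 w"
    using AE_allB
  proof eventually_elim
    case (elim w)
    then have "(\<Sum>t<T. (Dt w t)^2) = (\<Sum>t<T. \<delta>^2 * (price \<pi> (th 1) w t - 1)^2)"
      by (intro sum.cong) (auto simp: allB_def Dt_B power2_eq_square algebra_simps)
    also have "\<dots> = \<delta>^2 * (\<Sum>t<T. (price \<pi> (th 1) w t - 1)^2)" by (simp add: sum_distrib_left)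
    moreover have "ennreal (\<delta>^2 * (\<Sum>t<T. (price \<pi> (th 1) w t - 1)^2))
        = ennreal (\<delta>^2) * ennreal (\<Sum>t<T. (price \<pi> (th 1) w t - 1)^2)"
      by (rule ennreal_mult) (auto intro: sum_nonneg)
    ultimately show ?case using elim by (simp add: G1_def)
  qed
  have "(\<integral>\<^sup>+w. ennreal (\<Sum>t<T. (Dt w t)^2) \<partial>PP) = (\<integral>\<^sup>+w. ennreal (\<delta>^2) * G1 w \<partial>PP)"
    by (rule nn_integral_cong_AE[OF ae])
  also have "\<dots> = ennreal (\<delta>^2) * (\<integral>\<^sup>+w. G1 w \<partial>PP)"
    by (rule nn_integral_cmult[OF G1_m])
  finally have eq: "(\<integral>\<^sup>+w. ennreal (\<Sum>t<T. (Dt w t)^2) \<partial>PP) = ennreal (\<delta>^2) * (\<integral>\<^sup>+w. G1 w \<partial>PP)" .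
  obtain x where x: "(\<integral>\<^sup>+w. G1 w \<partial>PP) = ennreal x" "0 \<le> x"
    using hyp by (cases "(\<integral>\<^sup>+w. G1 w \<partial>PP)") auto
  have "x < 1 / \<delta>^2" using hyp x \<delta> by (simp add: ennreal_less_iff)
  then have "\<delta>^2 * x < 1" using \<delta> by (simp add: field_simps)
  then show ?thesis unfolding eq x using x \<delta> by (simp add: ennreal_mult[symmetric] ennreal_less_iff[of _ 1, simplified] del: ennreal_mult)
qed

lemma Sq_int: "integrable PP (\<lambda>w. \<Sum>t<T. (Dt w t)^2)"
proof -
  have l: "(\<integral>\<^sup>+w. ennreal (\<Sum>t<T. (Dt w t)^2) \<partial>PP) < \<infinity>"
    by (rule less_trans[OF Sq_nn]) simp
  show ?thesis
    by (rule integrableI_nonneg[OF Sq_m _ l]) (intro AE_I2 sum_nonneg, auto)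
qed

lemma Sq_lt: "(\<integral>w. (\<Sum>t<T. (Dt w t)^2) \<partial>PP) < 1"
proof -
  have "ennreal (\<integral>w. (\<Sum>t<T. (Dt w t)^2) \<partial>PP) = (\<integral>\<^sup>+w. ennreal (\<Sum>t<T. (Dt w t)^2) \<partial>PP)"
    by (rule nn_integral_eq_integral[symmetric, OF Sq_int]) (auto intro!: AE_I2 sum_nonneg)
  with Sq_nn have l: "ennreal (\<integral>w. (\<Sum>t<T. (Dt w t)^2) \<partial>PP) < ennreal 1" by simp
  have "0 \<le> (\<integral>w. (\<Sum>t<T. (Dt w t)^2) \<partial>PP)" by (intro integral_nonneg_AE AE_I2 sum_nonneg) auto
  with l show ?thesis by (simp add: ennreal_less_iff)
qed

lemma D2_int: assumes t: "t < T" shows "integrable PP (\<lambda>w. (Dt w t)^2)"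
proof (rule Bochner_Integration.integrable_bound[OF Sq_int])
  show "(\<lambda>w. (Dt w t)^2) \<in> borel_measurable PP" by (intro borel_measurable_power Dt_m t)
  show "AE w in PP. norm ((Dt w t)^2) \<le> norm (\<Sum>t<T. (Dt w t)^2)"
  proof (intro AE_I2)
    fix w
    have "(Dt w t)^2 \<le> (\<Sum>t<T. (Dt w t)^2)"
      by (rule member_le_sum[where f="\<lambda>t. (Dt w t)^2"]) (use t in auto)
    moreover have "0 \<le> (\<Sum>t<T. (Dt w t)^2)" by (intro sum_nonneg) auto
    ultimately show "norm ((Dt w t)^2) \<le> norm (\<Sum>t<T. (Dt w t)^2)" by simp
  qed
qed

lemma eD_int: "t < T \<Longrightarrow> integrable PP (\<lambda>w. snd (w t) * Dt w t)"
proof -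
  assume t: "t < T"
  have int: "integrable PP (\<lambda>w. (snd (w t))^2 + (Dt w t)^2)"
    by (intro Bochner_Integration.integrable_add eps_sq_int D2_int t)
  have ab: "\<bar>a * b\<bar> \<le> a^2 + b^2" for a b :: real
  proof -
    have e: "(\<bar>a\<bar> - \<bar>b\<bar>)^2 = a^2 - 2 * \<bar>a * b\<bar> + b^2"
      by (simp add: power2_eq_square abs_mult algebra_simps)
    have "0 \<le> (\<bar>a\<bar> - \<bar>b\<bar>)^2" by simp
    then show ?thesis unfolding e by simp
  qed
  show ?thesis
  proof (rule Bochner_Integration.integrable_bound[OF int])
    show "(\<lambda>w. snd (w t) * Dt w t) \<in> borel_measurable PP"
      by (intro borel_measurable_times snd_m Dt_m t)
    show "AE w in PP. norm (snd (w t) * Dt w t) \<le> norm ((snd (w t))^2 + (Dt w t)^2)"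
      by (intro AE_I2) (simp add: ab)
  qed
qed

lemma eD_zero: assumes t: "t < T" shows "(\<integral>w. snd (w t) * Dt w t \<partial>PP) = 0"
proof -
  have Gm: "(\<lambda>w. ennreal (snd (w t) * Dt w t)) \<in> borel_measurable PP"
    by (intro ennr_m borel_measurable_times snd_m Dt_m t)
  have "(\<integral>\<^sup>+w. (\<lambda>w. ennreal (snd (w t) * Dt w t)) (w(t := (fst (w t), - snd (w t)))) \<partial>PP)
      = (\<integral>\<^sup>+w. ennreal (snd (w t) * Dt w t) \<partial>PP)"
    by (rule REFLECT[OF Fm_prob t Gm])
  moreover have "Dt (w(t := (fst (w t), - snd (w t)))) t = Dt w t" for w
    by (rule Dx_inv)
  ultimately have r: "(\<integral>\<^sup>+w. ennreal (- (snd (w t) * Dt w t)) \<partial>PP) = (\<integral>\<^sup>+w. ennreal (snd (w t) * Dt w t) \<partial>PP)"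
    by simp
  show ?thesis
    unfolding real_lebesgue_integral_def[OF eD_int[OF t]] r by simp
qed

definition Yf where "Yf w = (\<Sum>t<T. snd (w t) * Dt w t - (Dt w t)^2 / 2)"

lemma LL_Y: "LL w = exp (Yf w)" by (simp add: Lik_def Yf_def)

lemma Y_m: "Yf \<in> borel_measurable PP"
  unfolding Yf_def[abs_def]
  by (intro borel_measurable_sum borel_measurable_diff borel_measurable_times borel_measurable_divide
        borel_measurable_power snd_m Dt_m borel_measurable_const) auto

lemma Y_int: "integrable PP Yf"
  unfolding Yf_def[abs_def]
  by (intro Bochner_Integration.integrable_sum Bochner_Integration.integrable_diff integrable_divide_zero eD_int D2_int) auto

lemma Y_integral: "(\<integral>w. Yf w \<partial>PP) > - 1 / 2"
proof -
  have "(\<integral>w. Yf w \<partial>PP) = (\<Sum>t<T. (\<integral>w. snd (w t) * Dt w t - (Dt w t)^2 / 2 \<partial>PP))"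
    unfolding Yf_def
    by (rule Bochner_Integration.integral_sum) (intro Bochner_Integration.integrable_diff integrable_divide_zero eD_int D2_int, auto)
  also have "\<dots> = (\<Sum>t<T. - (\<integral>w. (Dt w t)^2 \<partial>PP) / 2)"
  proof (rule sum.cong[OF refl])
    fix t assume "t \<in> {..<T}" then have t: "t < T" by simp
    show "(\<integral>w. snd (w t) * Dt w t - (Dt w t)^2 / 2 \<partial>PP) = - (\<integral>w. (Dt w t)^2 \<partial>PP) / 2"
      using eD_int[OF t] D2_int[OF t] eD_zero[OF t]
      by (subst Bochner_Integration.integral_diff) (auto intro: integrable_divide_zero)
  qed
  also have "\<dots> = - (\<Sum>t<T. (\<integral>w. (Dt w t)^2 \<partial>PP)) / 2"
    by (simp add: sum_negf sum_divide_distrib)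
  also have "(\<Sum>t<T. (\<integral>w. (Dt w t)^2 \<partial>PP)) = (\<integral>w. (\<Sum>t<T. (Dt w t)^2) \<partial>PP)"
    by (rule Bochner_Integration.integral_sum[symmetric]) (auto intro: D2_int)
  finally show ?thesis using Sq_lt by simp
qed

lemma LL_int: "integrable PP LL" and LL_integral: "(\<integral>w. LL w \<partial>PP) = 1"
proof -
  have l: "(\<integral>\<^sup>+w. ennreal (LL w) \<partial>PP) < \<infinity>" using int_LL by simp
  show i: "integrable PP LL"
    by (rule integrableI_nonneg[OF LL_m _ l]) (simp add: Lik_def)
  have "ennreal (\<integral>w. LL w \<partial>PP) = (\<integral>\<^sup>+w. ennreal (LL w) \<partial>PP)"
    by (rule nn_integral_eq_integral[symmetric, OF i]) (simp add: Lik_def)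
  then show "(\<integral>w. LL w \<partial>PP) = 1" using int_LL by simp
qed

lemma sqrtL_m: "(\<lambda>w. exp (Yf w / 2)) \<in> borel_measurable PP"
  using Y_m by measurable

lemma sqrtL_int: "integrable PP (\<lambda>w. exp (Yf w / 2))"
proof -
  interpret prob_space PP by (rule PP_prob)
  have int: "integrable PP (\<lambda>w. 1 + LL w)"
    by (intro Bochner_Integration.integrable_add integrable_const LL_int)
  show ?thesis
  proof (rule Bochner_Integration.integrable_bound[OF int sqrtL_m])
    show "AE w in PP. norm (exp (Yf w / 2)) \<le> norm (1 + LL w)"
    proof (intro AE_I2)
      fix w
      have "exp (Yf w / 2) \<le> 1 + exp (Yf w)"
      proof (cases "Yf w \<le> 0")
        case True then have "exp (Yf w / 2) \<le> 1" by simp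
        then show ?thesis by (smt (verit) exp_gt_zero)
      next
        case False then have "exp (Yf w / 2) \<le> exp (Yf w)" by simp
        then show ?thesis using exp_gt_zero[of "Yf w"] by linarith
      qed
      then show "norm (exp (Yf w / 2)) \<le> norm (1 + LL w)" by (simp add: LL_Y)
    qed
  qed
qed

lemma sqrtL_ge: "(\<integral>w. exp (Yf w / 2) \<partial>PP) \<ge> 3 / 4"
proof -
  interpret prob_space PP by (rule PP_prob)
  have "(\<integral>w. 1 + Yf w / 2 \<partial>PP) \<le> (\<integral>w. exp (Yf w / 2) \<partial>PP)"
    by (intro integral_mono sqrtL_int Bochner_Integration.integrable_add integrable_const integrable_divide_zero Y_int)
       (rule exp_ge_add_one_self)
  moreover have "(\<integral>w. 1 + Yf w / 2 \<partial>PP) = 1 + (\<integral>w. Yf w \<partial>PP) / 2"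
    using Y_int by (subst Bochner_Integration.integral_add) (auto intro: integrable_divide_zero simp: prob_space)
  ultimately show ?thesis using Y_integral by (simp add: prob_space)
qed

lemma min_pw:
  fixes s :: real assumes s: "0 \<le> s"
  shows "17/10 * s - (1 + s^2) / 2 \<le> min 1 (s^2)"
proof -
  have h1: "(s - 17/30) * (s - 17/30) = s * s - 17/15 * s + 289/900" by (simp add: algebra_simps)
  have h2: "(s - 17/10) * (s - 17/10) = s * s - 17/5 * s + 289/100" by (simp add: algebra_simps)
  have p1: "0 \<le> (s - 17/30) * (s - 17/30)" and p2: "0 \<le> (s - 17/10) * (s - 17/10)" by simp_all
  have q1: "0 \<le> s * s - 17/15 * s + 289/900" using h1 p1 by simp
  have q2: "0 \<le> s * s - 17/5 * s + 289/100" using h2 p2 by simp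
  obtain u where u: "u = s * s" by simp
  have "17/10 * s - (1 + u) / 2 \<le> u" using q1 unfolding u[symmetric] by (simp add: field_simps)
  moreover have "17/10 * s - (1 + u) / 2 \<le> 1" using q2 unfolding u[symmetric] by (simp add: field_simps)
  ultimately have "17/10 * s - (1 + s * s) / 2 \<le> s * s" "17/10 * s - (1 + s * s) / 2 \<le> 1" using u by auto
  then show ?thesis by (simp add: power2_eq_square)
qed

lemma min_m: "(\<lambda>w. min 1 (LL w)) \<in> borel_measurable PP"
  using LL_m by measurable

lemma min_int: "integrable PP (\<lambda>w. min 1 (LL w))"
proof (rule Bochner_Integration.integrable_bound[OF LL_int min_m])
  show "AE w in PP. norm (min 1 (LL w)) \<le> norm (LL w)"
    by (intro AE_I2) (simp add: Lik_def)
qed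

lemma min_ge: "(\<integral>w. min 1 (LL w) \<partial>PP) \<ge> 1 / 4"
proof -
  interpret prob_space PP by (rule PP_prob)
  have "(\<integral>w. 17/10 * exp (Yf w / 2) - (1 + LL w) / 2 \<partial>PP) \<le> (\<integral>w. min 1 (LL w) \<partial>PP)"
  proof (intro integral_mono min_int Bochner_Integration.integrable_diff integrable_mult_right integrable_divide_zero
      Bochner_Integration.integrable_add integrable_const LL_int sqrtL_int)
    fix w
    have e: "LL w = (exp (Yf w / 2))^2" by (simp add: LL_Y power2_eq_square exp_add[symmetric])
    show "17/10 * exp (Yf w / 2) - (1 + LL w) / 2 \<le> min 1 (LL w)"
      unfolding e by (rule min_pw) simp
  qed
  moreover have "(\<integral>w. 17/10 * exp (Yf w / 2) - (1 + LL w) / 2 \<partial>PP)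
      = 17/10 * (\<integral>w. exp (Yf w / 2) \<partial>PP) - (1 + (\<integral>w. LL w \<partial>PP)) / 2"
    using sqrtL_int LL_int
    by (simp add: Bochner_Integration.integral_diff Bochner_Integration.integral_add integrable_divide_zero
        Bochner_Integration.integrable_add prob_space)
  ultimately show ?thesis using sqrtL_ge LL_integral by simp
qed

lemma min_nn_ge: "(\<integral>\<^sup>+w. ennreal (min 1 (LL w)) \<partial>PP) \<ge> ennreal (1 / 4)"
proof -
  have "(\<integral>\<^sup>+w. ennreal (min 1 (LL w)) \<partial>PP) = ennreal (\<integral>w. min 1 (LL w) \<partial>PP)"
    by (rule nn_integral_eq_integral[OF min_int]) (simp add: Lik_def)
  then show ?thesis using min_ge by (simp add: ennreal_leI)
qed

end

lemma ONLINE: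
  "(\<integral>\<^sup>+w. G1 w \<partial>PP) \<ge> ennreal (1 / \<delta>^2) \<or>
   (\<integral>\<^sup>+w. G1 w \<partial>PP) + (\<integral>\<^sup>+w. (if allB w then ennreal (\<Sum>t<T. (1 + \<delta>) * (price \<pi> (th (1 + \<delta>)) w t - qd)^2) else 0) \<partial>PP)
     \<ge> ennreal (real T * \<delta>^2 / 128)"
proof (cases "(\<integral>\<^sup>+w. G1 w \<partial>PP) < ennreal (1 / \<delta>^2)")
  case False then show ?thesis by (simp add: not_less)
next
  case True
  define c where "c = real T * \<delta>^2 / 32"
  have c0: "0 \<le> c" by (simp add: c_def)
  have ae: "AE w in PP. ennreal c * ennreal (min 1 (LL w)) \<le> G1 w + Gd w * ennreal (LL w)"
    using AE_allB
  proof eventually_elim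
    case (elim w)
    define a where "a = (\<Sum>t<T. (price \<pi> (th 1) w t - 1)^2)"
    define b where "b = (\<Sum>t<T. (1 + \<delta>) * (price \<pi> (th 1) w t - qd)^2)"
    have a0: "0 \<le> a" and b0: "0 \<le> b" using \<delta> by (auto simp: a_def b_def intro!: sum_nonneg)
    have ab: "c \<le> a + b" using sum_regret[of w] by (simp add: a_def b_def c_def)
    have L0: "0 \<le> LL w" by (simp add: Lik_def)
    define m where "m = min 1 (LL w)"
    have m0: "0 \<le> m" using L0 by (simp add: m_def)
    have "c * m \<le> (a + b) * m" using ab m0 by (rule mult_right_mono)
    also have "\<dots> = a * m + b * m" by (simp add: algebra_simps)
    also have "\<dots> \<le> a * 1 + b * LL w" using a0 b0 by (intro add_mono mult_left_mono) (auto simp: m_def)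
    finally have le: "c * m \<le> a + b * LL w" by simp
    have "ennreal c * ennreal m = ennreal (c * m)" using c0 m0 by (simp add: ennreal_mult)
    also have "\<dots> \<le> ennreal (a + b * LL w)" using le by (rule ennreal_leI)
    also have "\<dots> = ennreal a + ennreal b * ennreal (LL w)" using a0 b0 L0 by (simp add: ennreal_mult ennreal_plus)
    also have "\<dots> = G1 w + Gd w * ennreal (LL w)" using elim by (simp add: G1_def Gd_def a_def b_def)
    finally show ?case by (simp add: m_def)
  qed
  have "ennreal (real T * \<delta>^2 / 128) = ennreal c * ennreal (1 / 4)"
    using c0 by (simp add: ennreal_mult[symmetric] c_def)
  also have "\<dots> \<le> ennreal c * (\<integral>\<^sup>+w. ennreal (min 1 (LL w)) \<partial>PP)"
    by (intro mult_left_mono min_nn_ge[OF True]) auto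
  also have "\<dots> = (\<integral>\<^sup>+w. ennreal c * ennreal (min 1 (LL w)) \<partial>PP)"
    by (rule nn_integral_cmult[symmetric]) (intro ennr_m min_m[OF True])
  also have "\<dots> \<le> (\<integral>\<^sup>+w. G1 w + Gd w * ennreal (LL w) \<partial>PP)"
    by (rule nn_integral_mono_AE[OF ae])
  also have "\<dots> = (\<integral>\<^sup>+w. G1 w \<partial>PP) + (\<integral>\<^sup>+w. Gd w * ennreal (LL w) \<partial>PP)"
    using G1_m borel_measurable_times_ennreal[OF Gd_m ennr_m[OF LL_m]] by (rule nn_integral_add)
  also have "(\<integral>\<^sup>+w. Gd w * ennreal (LL w) \<partial>PP)
     = (\<integral>\<^sup>+w. (if allB w then ennreal (\<Sum>t<T. (1 + \<delta>) * (price \<pi> (th (1 + \<delta>)) w t - qd)^2) else 0) \<partial>PP)"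
    by (rule Id_eq[symmetric])
  finally show ?thesis by simp
qed

end

lemma Aset_meas: "Aset T \<in> sets (PiM {..<T} (\<lambda>_. (Fm::('a::euclidean_space \<times> 'b::euclidean_space) measure) \<Otimes>\<^sub>M gauss))"
  by (rule Aset_sets[where \<pi>="(\<lambda>_ _. 0) :: ('a, 'b) obs list \<Rightarrow> ('a \<times> 'b) \<Rightarrow> real" and \<delta>=1])
     (auto simp: price_def)

lemma main_bound:
  fixes pol :: "('a::euclidean_space, 'b::euclidean_space) policy" and T N :: nat
  assumes adm: "admissible_policy pol (th ` {1..2}) Fm gauss gauss xh yh ph N"
    and T1: "1 \<le> T"
  shows "ennreal (sqrt (real T) / 256)
     \<le> (SUP \<theta>s\<in>(th ` {1..2}) \<times> (th ` {1..2}). regret pol Fm gauss gauss xh yh ph N T (fst \<theta>s) (snd \<theta>s))"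
proof -
  let ?PP = "PiM {..<T} (\<lambda>_. (Fm::('a \<times> 'b) measure) \<Otimes>\<^sub>M gauss)"
  let ?Poff = "PiM {..<N} (\<lambda>_. gauss)"
  let ?M = "sample_space (Fm::('a \<times> 'b) measure) gauss gauss T N"
  have Mdef: "?M = ?PP \<Otimes>\<^sub>M ?Poff" by (simp add: sample_space_def)
  define \<delta> where "\<delta> = 1 / sqrt (sqrt (real T))"
  have sT: "1 \<le> sqrt (real T)" using T1 by simp
  have \<delta>0: "0 < \<delta>" using T1 by (simp add: \<delta>_def)
  have \<delta>1: "\<delta> \<le> 1" using sT by (simp add: \<delta>_def)
  have \<delta>2: "\<delta>^2 = 1 / sqrt (real T)" by (simp add: \<delta>_def power_divide)
  have i\<delta>2: "1 / \<delta>^2 = sqrt (real T)" by (simp add: \<delta>2)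
  have T\<delta>2: "real T * \<delta>^2 = sqrt (real T)"
    using T1 by (simp add: \<delta>2 field_simps)
  interpret Poff: prob_space ?Poff by (intro prob_space_PiM gauss_prob)
  have PP_sf: "sigma_finite_measure ?PP"
    by (intro prob_space_imp_sigma_finite prob_space_PiM prob_space_pair Fm_prob gauss_prob)
  interpret PS: pair_sigma_finite ?PP ?Poff
    using PP_sf Poff.sigma_finite_measure_axioms by (simp add: pair_sigma_finite_def)
  have pp_m: "(\<lambda>\<omega>. policy_price pol xh yh ph N T (th 1) (th b) \<omega> t) \<in> borel_measurable (?PP \<Otimes>\<^sub>M ?Poff)"
    if "b \<in> {1..2}" "t < T" for b t
    using adm that unfolding admissible_policy_def by (auto simp: sample_space_def)
  define g where "g b \<omega> = (if allB T (fst \<omega>) then ennreal (\<Sum>t<T. b * (policy_price pol xh yh ph N T (th 1) (th b) \<omega> t - (1 + b) / (2 * b))^2) else 0)"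
    for b :: real and \<omega> :: "(nat \<Rightarrow> ('a \<times> 'b) \<times> real) \<times> (nat \<Rightarrow> real)"
  have Aw: "{\<omega>. allB T (fst \<omega>)} \<inter> space (?PP \<Otimes>\<^sub>M ?Poff) \<in> sets (?PP \<Otimes>\<^sub>M ?Poff)"
  proof -
    have "fst -` Aset T \<inter> space (?PP \<Otimes>\<^sub>M ?Poff) \<in> sets (?PP \<Otimes>\<^sub>M ?Poff)"
      by (rule measurable_sets[OF measurable_fst Aset_meas])
    moreover have "fst -` Aset T \<inter> space (?PP \<Otimes>\<^sub>M ?Poff) = {\<omega>. allB T (fst \<omega>)} \<inter> space (?PP \<Otimes>\<^sub>M ?Poff)"
      by (auto simp: Aset_def[where \<pi>="(\<lambda>_ _. 0) :: ('a, 'b) obs list \<Rightarrow> ('a \<times> 'b) \<Rightarrow> real" and \<delta>=1, OF _ zero_less_one order_refl]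
                     price_def space_pair_measure)
    ultimately show ?thesis by simp
  qed
  have g_m: "g b \<in> borel_measurable (?PP \<Otimes>\<^sub>M ?Poff)" if b: "b \<in> {1..2}" for b
  proof -
    have "(\<lambda>\<omega>. ennreal (\<Sum>t<T. b * (policy_price pol xh yh ph N T (th 1) (th b) \<omega> t - (1 + b) / (2 * b))^2))
        \<in> borel_measurable (?PP \<Otimes>\<^sub>M ?Poff)"
    proof -
      have "(\<lambda>\<omega>. \<Sum>t<T. b * (policy_price pol xh yh ph N T (th 1) (th b) \<omega> t - (1 + b) / (2 * b))^2)
          \<in> borel_measurable (?PP \<Otimes>\<^sub>M ?Poff)"
        by (intro borel_measurable_sum borel_measurable_times borel_measurable_power borel_measurable_diff
            borel_measurable_const pp_m[OF b]) auto
      from measurable_compose[OF this measurable_ennreal] show ?thesis by simp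
    qed
    then have "(\<lambda>\<omega>. if \<omega> \<in> {\<omega>. allB T (fst \<omega>)} then ennreal (\<Sum>t<T. b * (policy_price pol xh yh ph N T (th 1) (th b) \<omega> t - (1 + b) / (2 * b))^2) else 0)
        \<in> borel_measurable (?PP \<Otimes>\<^sub>M ?Poff)"
      by (intro measurable_If_set Aw borel_measurable_const)
    then show ?thesis by (simp add: g_def[abs_def])
  qed
  have reg_ge: "regret pol Fm gauss gauss xh yh ph N T (th 1) (th b) \<ge> (\<integral>\<^sup>+\<omega>. g b \<omega> \<partial>(?PP \<Otimes>\<^sub>M ?Poff))"
    if b: "b \<in> {1..2}" for b
    unfolding regret_def Mdef
  proof (rule nn_integral_mono)
    fix \<omega> :: "(nat \<Rightarrow> ('a \<times> 'b) \<times> real) \<times> (nat \<Rightarrow> real)"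
    show "g b \<omega> \<le> ennreal (\<Sum>t<T. opt_revenue (th b) (fst (fst (fst \<omega> t))) (snd (fst (fst \<omega> t)))
              - revenue (th b) (policy_price pol xh yh ph N T (th 1) (th b) \<omega> t) (fst (fst (fst \<omega> t))) (snd (fst (fst \<omega> t))))"
    proof (cases "allB T (fst \<omega>)")
      case True
      have "(\<Sum>t<T. opt_revenue (th b) (fst (fst (fst \<omega> t))) (snd (fst (fst \<omega> t)))
              - revenue (th b) (policy_price pol xh yh ph N T (th 1) (th b) \<omega> t) (fst (fst (fst \<omega> t))) (snd (fst (fst \<omega> t))))
          = (\<Sum>t<T. b * (policy_price pol xh yh ph N T (th 1) (th b) \<omega> t - (1 + b) / (2 * b))^2)"
      proof (rule sum.cong[OF refl])
        fix t assume "t \<in> {..<T}"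
        then have "fst (fst \<omega> t) \<in> Bset" using True
          by (simp add: allB_def[where \<pi>="(\<lambda>_ _. 0) :: ('a, 'b) obs list \<Rightarrow> ('a \<times> 'b) \<Rightarrow> real" and \<delta>=1, OF _ zero_less_one order_refl] price_def)
        then show "opt_revenue (th b) (fst (fst (fst \<omega> t))) (snd (fst (fst \<omega> t)))
              - revenue (th b) (policy_price pol xh yh ph N T (th 1) (th b) \<omega> t) (fst (fst (fst \<omega> t))) (snd (fst (fst \<omega> t)))
            = b * (policy_price pol xh yh ph N T (th 1) (th b) \<omega> t - (1 + b) / (2 * b))^2"
          using b by (intro regret_th) (auto simp: Bset_def mem_Times_iff)
      qed
      then show ?thesis using True by (simp add: g_def)
    qed (simp add: g_def)
  qed
  have b1: "(1::real) \<in> {1..2}" and b2: "1 + \<delta> \<in> {1..2}" using \<delta>0 \<delta>1 by auto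
  have inner: "ennreal (sqrt (real T) / 128) \<le> (\<integral>\<^sup>+w. g 1 (w, v) + g (1 + \<delta>) (w, v) \<partial>?PP)"
    if v: "v \<in> space ?Poff" for v
  proof -
    define \<pi> where "\<pi> = pol T (offline_data (th 1) xh yh ph N v)"
    have sec: "(\<lambda>w. (w, v)) \<in> measurable ?PP (?PP \<Otimes>\<^sub>M ?Poff)"
      using v by (intro measurable_Pair measurable_ident_sets measurable_const) auto
    have pm: "(\<lambda>w. price \<pi> (th 1) w t) \<in> borel_measurable ?PP" if t: "t < T" for t
      using measurable_compose[OF sec pp_m[OF b1 t]] by (simp add: policy_price_def \<pi>_def)
    have gm: "(\<lambda>w. g b (w, v)) \<in> borel_measurable ?PP" if "b \<in> {1..2}" for b
      using measurable_compose[OF sec g_m[OF that]] by simp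
    have pp_eq: "policy_price pol xh yh ph N T (th 1) \<theta> (w, v) t = price \<pi> \<theta> w t" for \<theta> w t
      by (simp add: policy_price_def \<pi>_def)
    have e1: "g 1 (w, v) = G1 \<pi> T w" for w
      by (simp add: g_def G1_def[OF pm \<delta>0 \<delta>1] pp_eq)
    have e2: "g (1 + \<delta>) (w, v) = (if allB T w then ennreal (\<Sum>t<T. (1 + \<delta>) * (price \<pi> (th (1 + \<delta>)) w t - qd \<delta>)^2) else 0)" for w
      by (simp add: g_def qd_def[OF pm \<delta>0 \<delta>1] pp_eq)
    have "(\<integral>\<^sup>+w. g 1 (w, v) + g (1 + \<delta>) (w, v) \<partial>?PP) = (\<integral>\<^sup>+w. g 1 (w, v) \<partial>?PP) + (\<integral>\<^sup>+w. g (1 + \<delta>) (w, v) \<partial>?PP)"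
      by (rule nn_integral_add[OF gm[OF b1] gm[OF b2]])
    also have "\<dots> = (\<integral>\<^sup>+w. G1 \<pi> T w \<partial>?PP) + (\<integral>\<^sup>+w. (if allB T w then ennreal (\<Sum>t<T. (1 + \<delta>) * (price \<pi> (th (1 + \<delta>)) w t - qd \<delta>)^2) else 0) \<partial>?PP)"
      by (simp add: e1 e2)
    finally have eq: "(\<integral>\<^sup>+w. g 1 (w, v) + g (1 + \<delta>) (w, v) \<partial>?PP) = \<dots>" .
    from ONLINE[OF pm \<delta>0 \<delta>1] show ?thesis
    proof
      assume h: "ennreal (1 / \<delta>^2) \<le> (\<integral>\<^sup>+w. G1 \<pi> T w \<partial>?PP)"
      have "ennreal (sqrt (real T) / 128) \<le> ennreal (1 / \<delta>^2)" using i\<delta>2 by (simp add: ennreal_leI)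
      also note h
      also have "(\<integral>\<^sup>+w. G1 \<pi> T w \<partial>?PP) \<le> (\<integral>\<^sup>+w. G1 \<pi> T w \<partial>?PP) + (\<integral>\<^sup>+w. (if allB T w then ennreal (\<Sum>t<T. (1 + \<delta>) * (price \<pi> (th (1 + \<delta>)) w t - qd \<delta>)^2) else 0) \<partial>?PP)"
        by simp
      finally show ?thesis unfolding eq .
    next
      assume h: "ennreal (real T * \<delta>^2 / 128) \<le> (\<integral>\<^sup>+w. G1 \<pi> T w \<partial>?PP) + (\<integral>\<^sup>+w. (if allB T w then ennreal (\<Sum>t<T. (1 + \<delta>) * (price \<pi> (th (1 + \<delta>)) w t - qd \<delta>)^2) else 0) \<partial>?PP)"
      then show ?thesis unfolding eq T\<delta>2 .
    qed
  qed
  define R where "R b = regret pol Fm gauss gauss xh yh ph N T (th 1) (th b)" for b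
  have "ennreal (sqrt (real T) / 128) = (\<integral>\<^sup>+v. ennreal (sqrt (real T) / 128) \<partial>?Poff)"
    by (simp add: Poff.emeasure_space_1)
  also have "\<dots> \<le> (\<integral>\<^sup>+v. \<integral>\<^sup>+w. g 1 (w, v) + g (1 + \<delta>) (w, v) \<partial>?PP \<partial>?Poff)"
    by (rule nn_integral_mono) (rule inner)
  also have "\<dots> = (\<integral>\<^sup>+\<omega>. g 1 \<omega> + g (1 + \<delta>) \<omega> \<partial>(?PP \<Otimes>\<^sub>M ?Poff))"
    using PS.nn_integral_snd[of "\<lambda>\<omega>. g 1 \<omega> + g (1 + \<delta>) \<omega>"] g_m[OF b1] g_m[OF b2] by simp
  also have "\<dots> = (\<integral>\<^sup>+\<omega>. g 1 \<omega> \<partial>(?PP \<Otimes>\<^sub>M ?Poff)) + (\<integral>\<^sup>+\<omega>. g (1 + \<delta>) \<omega> \<partial>(?PP \<Otimes>\<^sub>M ?Poff))"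
    by (rule nn_integral_add[OF g_m[OF b1] g_m[OF b2]])
  also have "\<dots> \<le> R 1 + R (1 + \<delta>)"
    unfolding R_def by (intro add_mono reg_ge b1 b2)
  finally have sum: "ennreal (sqrt (real T) / 128) \<le> R 1 + R (1 + \<delta>)" .
  define S where "S = (SUP \<theta>s\<in>(th ` {1..2}) \<times> (th ` {1..2}). regret pol Fm gauss gauss xh yh ph N T (fst \<theta>s) (snd \<theta>s))"
  have R1S: "R 1 \<le> S" unfolding R_def S_def
    by (rule SUP_upper2[where i="(th 1, th 1)"]) (use b1 in auto)
  have R2S: "R (1 + \<delta>) \<le> S" unfolding R_def S_def
    by (rule SUP_upper2[where i="(th 1, th (1 + \<delta>))"]) (use b1 b2 in auto)
  have "2 * ennreal (sqrt (real T) / 256) = ennreal (sqrt (real T) / 128)"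
  proof -
    have "ennreal (sqrt (real T) / 128) = ennreal (2 * (sqrt (real T) / 256))" by simp
    also have "\<dots> = ennreal 2 * ennreal (sqrt (real T) / 256)" by (rule ennreal_mult) auto
    finally show ?thesis by simp
  qed
  also note sum
  also have "R 1 + R (1 + \<delta>) \<le> S + S" using R1S R2S by (rule add_mono)
  also have "S + S = 2 * S" by (simp add: mult_2)
  finally have "2 * ennreal (sqrt (real T) / 256) \<le> 2 * S" .
  then show ?thesis unfolding S_def by (subst (asm) ennreal_mult_le_mult_iff) auto
qed

theorem corollary2p1:
  shows "\<exists>(\<Theta> :: ('a::euclidean_space \<times> 'b::euclidean_space) set) (X :: 'a set) (Y :: 'b set)
            (F :: ('a \<times> 'b) measure) (E :: real measure) (Eh :: real measure) (R :: real).
     assumption1 \<Theta> X Y F \<and> 0 < R \<and> subgaussian_zero_mean R E \<and> subgaussian_zero_mean R Eh \<and>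
     (\<forall>(N :: nat) (xh :: nat \<Rightarrow> 'a) (yh :: nat \<Rightarrow> 'b) (ph :: nat \<Rightarrow> real).
        (\<forall>n<N. xh n \<in> X \<and> yh n \<in> Y) \<longrightarrow>
        (\<forall>pol :: ('a, 'b) policy. admissible_policy pol \<Theta> F E Eh xh yh ph N \<longrightarrow>
           (\<exists>c>0. \<forall>\<^sub>F T in at_top.
              ennreal (c * sqrt (real T))
                \<le> (SUP \<theta>s\<in>\<Theta> \<times> \<Theta>. regret pol F E Eh xh yh ph N T (fst \<theta>s) (snd \<theta>s)))))"
proof (rule exI[of _ "th ` {1..2}"], rule exI[of _ Basis], rule exI[of _ Basis], rule exI[of _ Fm],
    rule exI[of _ gauss], rule exI[of _ gauss], rule exI[of _ 1], intro conjI allI impI)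
  show "assumption1 (th ` {1..2} :: ('a \<times> 'b) set) Basis Basis Fm" by (rule assm1)
  show "(0::real) < 1" by simp
  show "subgaussian_zero_mean 1 gauss" by (rule subgauss)
  show "subgaussian_zero_mean 1 gauss" by (rule subgauss)
  fix N :: nat and xh :: "nat \<Rightarrow> 'a" and yh :: "nat \<Rightarrow> 'b" and ph :: "nat \<Rightarrow> real" and pol :: "('a, 'b) policy"
  assume adm: "admissible_policy pol (th ` {1..2}) Fm gauss gauss xh yh ph N"
  show "\<exists>c>0. \<forall>\<^sub>F T in at_top. ennreal (c * sqrt (real T))
          \<le> (SUP \<theta>s\<in>(th ` {1..2}) \<times> (th ` {1..2}). regret pol Fm gauss gauss xh yh ph N T (fst \<theta>s) (snd \<theta>s))"
  proof (intro exI[of _ "1/256"] conjI)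
    show "(0::real) < 1/256" by simp
    show "\<forall>\<^sub>F T in at_top. ennreal (1/256 * sqrt (real T))
          \<le> (SUP \<theta>s\<in>(th ` {1..2}) \<times> (th ` {1..2}). regret pol Fm gauss gauss xh yh ph N T (fst \<theta>s) (snd \<theta>s))"
      using eventually_ge_at_top[of "1::nat"]
    proof eventually_elim
      case (elim T)
      show ?case using main_bound[OF adm elim] by simp
    qed
  qed
qed

end
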